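(* In each homology class of singular based matrices there is, up to isomorphism, either a unique primitive singular based matrix or a pair of primitive singular based matrices.
   Context: A singular based matrix (SBM) is a quadruple $(G,s,d,b)$ where $G$ is a finite set, $s,d\in G$, $H$ is an abelian group and $b:G\times G\to H$ is skew-symmetric. Elementary extensions: $\widetilde M_1$ transforms $(G,s,d,b)$ into $(G\amalg\{g\},s,d,b_1)$ with $b_1$ extending $b$ and $b_1(g,h)=0$ for all $h$; $\widetilde M_2$ into $(G\amalg\{g\},s,d,b_2)$ with $b_2$ extending $b$ and $b_2(g,h)=b_2(s,h)$ for all $h$; $\widetilde M_3$ into $(G\amalg\{g_i,g_j\},s,d,b_3)$ with $b_3$ any skew-symmetric extension of $b$ satisfying $b_3(g_i,h)+b_3(g_j,h)=b_3(s,h)$ for all $h$; $\widetilde M_i^{-1}$ denotes the inverse operations. Singularity switch $N$: if $g\in G$ satisfies $b(g,h)+b(d,h)=b(s,h)$ for all $h\in G$, $N$ transforms $(G,s,d,b)$ into $(G,s,g,b)$. Two SBMs $(G,s,d,b)$, $(G',s',d',b')$ are isomorphic if there is a bijection $G\to G'$ sending $s\mapsto s'$, $d\mapsto d'$ and transforming $b$ into $b'$. An SBM is primitive if it cannot be obtained from another SBM by an elementary extension, even after applications of singularity switches. Two SBMs are homologous (lie in the same homology class) if one is obtained from the other by a finite sequence of moves $\widetilde M_1^{\pm1},\widetilde M_2^{\pm1},\widetilde M_3^{\pm1}$ and $N$ (and isomorphisms). *)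

theory Defs
  imports Main
begin

text \<open>The ground set G is a
finite set of natural numbers (any finite set is isomorphic to one of these, and nat
always provides fresh elements for the extensions); the form b is only relevant on G.\<close>

record 'h sbm =
  grd :: "nat set"
  sng :: nat
  dst :: nat
  frm :: "nat \<Rightarrow> nat \<Rightarrow> 'h"

definition skew_on :: "nat set \<Rightarrow> (nat \<Rightarrow> nat \<Rightarrow> 'h::ab_group_add) \<Rightarrow> bool" where
  "skew_on G b \<longleftrightarrow> (\<forall>x\<in>G. \<forall>y\<in>G. b x y = - b y x)"

definition is_sbm :: "('h::ab_group_add) sbm \<Rightarrow> bool" where
  "is_sbm M \<longleftrightarrow> finite (grd M) \<and> sng M \<in> grd M \<and> dst M \<in> grd M \<and> skew_on (grd M) (frm M)"

definition sbm_iso :: "('h::ab_group_add) sbm \<Rightarrow> 'h sbm \<Rightarrow> bool" where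
  "sbm_iso M M' \<longleftrightarrow> is_sbm M \<and> is_sbm M' \<and>
     (\<exists>f. bij_betw f (grd M) (grd M') \<and> f (sng M) = sng M' \<and> f (dst M) = dst M' \<and>
          (\<forall>x\<in>grd M. \<forall>y\<in>grd M. frm M' (f x) (f y) = frm M x y))"

definition extends_on :: "nat set \<Rightarrow> (nat \<Rightarrow> nat \<Rightarrow> 'h) \<Rightarrow> (nat \<Rightarrow> nat \<Rightarrow> 'h) \<Rightarrow> bool" where
  "extends_on G b b' \<longleftrightarrow> (\<forall>x\<in>G. \<forall>y\<in>G. b' x y = b x y)"

definition move1 :: "('h::ab_group_add) sbm \<Rightarrow> 'h sbm \<Rightarrow> bool" where
  "move1 M M' \<longleftrightarrow> is_sbm M \<and> is_sbm M' \<and> sng M' = sng M \<and> dst M' = dst M \<and>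
     (\<exists>g. g \<notin> grd M \<and> grd M' = insert g (grd M) \<and> extends_on (grd M) (frm M) (frm M') \<and>
          (\<forall>h\<in>grd M'. frm M' g h = 0))"

definition move2 :: "('h::ab_group_add) sbm \<Rightarrow> 'h sbm \<Rightarrow> bool" where
  "move2 M M' \<longleftrightarrow> is_sbm M \<and> is_sbm M' \<and> sng M' = sng M \<and> dst M' = dst M \<and>
     (\<exists>g. g \<notin> grd M \<and> grd M' = insert g (grd M) \<and> extends_on (grd M) (frm M) (frm M') \<and>
          (\<forall>h\<in>grd M'. frm M' g h = frm M' (sng M) h))"

definition move3 :: "('h::ab_group_add) sbm \<Rightarrow> 'h sbm \<Rightarrow> bool" where
  "move3 M M' \<longleftrightarrow> is_sbm M \<and> is_sbm M' \<and> sng M' = sng M \<and> dst M' = dst M \<and>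
     (\<exists>gi gj. gi \<notin> grd M \<and> gj \<notin> grd M \<and> gi \<noteq> gj \<and> grd M' = insert gi (insert gj (grd M)) \<and>
          extends_on (grd M) (frm M) (frm M') \<and>
          (\<forall>h\<in>grd M'. frm M' gi h + frm M' gj h = frm M' (sng M) h))"

definition elem_ext :: "('h::ab_group_add) sbm \<Rightarrow> 'h sbm \<Rightarrow> bool" where
  "elem_ext M M' \<longleftrightarrow> move1 M M' \<or> move2 M M' \<or> move3 M M'"

definition sing_switch :: "('h::ab_group_add) sbm \<Rightarrow> 'h sbm \<Rightarrow> bool" where
  "sing_switch M M' \<longleftrightarrow> is_sbm M \<and>
     (\<exists>g\<in>grd M. (\<forall>h\<in>grd M. frm M g h + frm M (dst M) h = frm M (sng M) h) \<and>
        M' = M\<lparr>dst := g\<rparr>)"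

definition switch_rel :: "('h::ab_group_add) sbm \<Rightarrow> 'h sbm \<Rightarrow> bool" where
  "switch_rel = (\<lambda>M M'. is_sbm M \<and> is_sbm M' \<and> (sing_switch M M' \<or> sbm_iso M M'))\<^sup>*\<^sup>*"

definition primitive :: "('h::ab_group_add) sbm \<Rightarrow> bool" where
  "primitive M \<longleftrightarrow> is_sbm M \<and>
     \<not> (\<exists>M0 M1. elem_ext M0 M1 \<and> (switch_rel M1 M \<or> sbm_iso M1 M))"

definition hom_step :: "('h::ab_group_add) sbm \<Rightarrow> 'h sbm \<Rightarrow> bool" where
  "hom_step M M' \<longleftrightarrow> sbm_iso M M' \<or> elem_ext M M' \<or> elem_ext M' M \<or>
     sing_switch M M' \<or> sing_switch M' M"

definition homologous :: "('h::ab_group_add) sbm \<Rightarrow> 'h sbm \<Rightarrow> bool" where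
  "homologous M M' \<longleftrightarrow> is_sbm M \<and> is_sbm M' \<and> hom_step\<^sup>*\<^sup>* M M'"

end

theory Submission
  imports Defs
begin


definition zr :: "('h::ab_group_add) sbm \<Rightarrow> nat \<Rightarrow> bool" where
  "zr M x \<longleftrightarrow> (\<forall>h\<in>grd M. frm M x h = 0)"
definition cr :: "('h::ab_group_add) sbm \<Rightarrow> nat \<Rightarrow> bool" where
  "cr M x \<longleftrightarrow> (\<forall>h\<in>grd M. frm M x h = frm M (sng M) h)"
definition eqr :: "('h::ab_group_add) sbm \<Rightarrow> nat \<Rightarrow> nat \<Rightarrow> bool" where
  "eqr M x y \<longleftrightarrow> (\<forall>h\<in>grd M. frm M x h = frm M y h)"
definition cpl :: "('h::ab_group_add) sbm \<Rightarrow> nat \<Rightarrow> nat \<Rightarrow> bool" where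
  "cpl M x y \<longleftrightarrow> (\<forall>h\<in>grd M. frm M x h + frm M y h = frm M (sng M) h)"

definition adm :: "('h::ab_group_add) sbm \<Rightarrow> nat \<Rightarrow> bool" where
  "adm M x \<longleftrightarrow> x \<in> grd M \<and> (eqr M x (dst M) \<or> cpl M x (dst M) \<or>
     ((zr M (dst M) \<or> cr M (dst M)) \<and> (zr M x \<or> cr M x)))"

definition rmv :: "('h::ab_group_add) sbm \<Rightarrow> nat \<Rightarrow> nat set \<Rightarrow> bool" where
  "rmv M x X \<longleftrightarrow> X \<subseteq> grd M \<and> sng M \<notin> X \<and> x \<notin> X \<and>
     ((\<exists>g. X = {g} \<and> (zr M g \<or> cr M g)) \<or> (\<exists>g1 g2. g1 \<noteq> g2 \<and> X = {g1,g2} \<and> cpl M g1 g2))"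

definition rm :: "('h::ab_group_add) sbm \<Rightarrow> nat set \<Rightarrow> 'h sbm" where
  "rm M X = M\<lparr>grd := grd M - X\<rparr>"

definition sw :: "('h::ab_group_add) sbm \<Rightarrow> nat \<Rightarrow> 'h sbm" where
  "sw M x = M\<lparr>dst := x\<rparr>"

definition red :: "('h::ab_group_add) sbm \<Rightarrow> 'h sbm \<Rightarrow> bool" where
  "red M A \<longleftrightarrow> is_sbm M \<and> (\<exists>x X. adm M x \<and> rmv M x X \<and> A = rm (sw M x) X)"

definition asw :: "('h::ab_group_add) sbm \<Rightarrow> 'h sbm \<Rightarrow> bool" where
  "asw M M' \<longleftrightarrow> is_sbm M \<and> (\<exists>z. adm M z \<and> M' = sw M z)"

definition E1 :: "('h::ab_group_add) sbm \<Rightarrow> 'h sbm \<Rightarrow> bool" where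
  "E1 M M' \<longleftrightarrow> sbm_iso M M' \<or> asw M M'"

abbreviation eqv :: "('h::ab_group_add) sbm \<Rightarrow> 'h sbm \<Rightarrow> bool" where
  "eqv \<equiv> E1\<^sup>*\<^sup>*"

definition RR :: "('h::ab_group_add) sbm \<Rightarrow> 'h sbm \<Rightarrow> bool" where
  "RR = (\<lambda>a b. E1 a b \<or> red a b)\<^sup>*\<^sup>*"

definition J :: "('h::ab_group_add) sbm \<Rightarrow> 'h sbm \<Rightarrow> bool" where
  "J A B \<longleftrightarrow> (\<exists>C. RR A C \<and> RR B C)"

definition normal :: "('h::ab_group_add) sbm \<Rightarrow> bool" where
  "normal N \<longleftrightarrow> is_sbm N \<and> \<not> (\<exists>A. red N A)"

lemma sw_simps[simp]: "grd (sw M x) = grd M" "sng (sw M x) = sng M" "dst (sw M x) = x" "frm (sw M x) = frm M"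
  "sw (sw M x) y = sw M y"
  by (auto simp: sw_def)

lemma rm_simps[simp]: "grd (rm M X) = grd M - X" "sng (rm M X) = sng M" "dst (rm M X) = dst M" "frm (rm M X) = frm M"
  "rm (rm M X) Y = rm M (X \<union> Y)" "sw (rm M X) x = rm (sw M x) X"
  by (auto simp: rm_def sw_def Diff_eq Int_assoc)

lemma rm_empty[simp]: "rm M {} = M" by (rule sbm.equality) (simp_all)

lemma sw_dst[simp]: "sw M (dst M) = M" by (simp add: sw_def)

lemma rowdefs_sw[simp]: "zr (sw M x) = zr M" "cr (sw M x) = cr M" "eqr (sw M x) = eqr M" "cpl (sw M x) = cpl M"
  by (auto simp: zr_def cr_def eqr_def cpl_def fun_eq_iff)

lemma rmv_sw[simp]: "rmv (sw M z) x X = rmv M x X"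
  by (simp add: rmv_def)

lemma preds_rm:
  "zr M g \<Longrightarrow> zr (rm M X) g" "cr M g \<Longrightarrow> cr (rm M X) g"
  "eqr M x y \<Longrightarrow> eqr (rm M X) x y" "cpl M x y \<Longrightarrow> cpl (rm M X) x y"
  by (auto simp: zr_def cr_def eqr_def cpl_def)

lemma adm_rm: "adm M z \<Longrightarrow> z \<notin> X \<Longrightarrow> adm (rm M X) z"
  unfolding adm_def by (auto dest: preds_rm)

lemma cpl_sym: "cpl M x y \<Longrightarrow> cpl M y x"
  by (simp add: cpl_def add.commute)

lemma eqr_refl: "eqr M x x" by (simp add: eqr_def)
lemma eqr_sym: "eqr M x y \<Longrightarrow> eqr M y x" by (simp add: eqr_def)
lemma eqr_trans: "eqr M x y \<Longrightarrow> eqr M y z \<Longrightarrow> eqr M x z" by (simp add: eqr_def)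
lemma eqr_cpl: "eqr M w d \<Longrightarrow> cpl M z d \<Longrightarrow> cpl M z w" by (simp add: eqr_def cpl_def)
lemma cpl_eqr: "cpl M w d \<Longrightarrow> eqr M z d \<Longrightarrow> cpl M z w" by (auto simp: eqr_def cpl_def add.commute)
lemma cpl_cpl: "cpl M w d \<Longrightarrow> cpl M z d \<Longrightarrow> eqr M z w"
  by (auto simp: eqr_def cpl_def) (metis add_right_cancel)
lemma eqr_zr: "eqr M w d \<Longrightarrow> zr M d \<Longrightarrow> zr M w" by (simp add: eqr_def zr_def)
lemma eqr_cr: "eqr M w d \<Longrightarrow> cr M d \<Longrightarrow> cr M w" by (simp add: eqr_def cr_def)
lemma cpl_zr: "cpl M w d \<Longrightarrow> zr M d \<Longrightarrow> cr M w" by (simp add: cpl_def zr_def cr_def)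
lemma cpl_cr: "cpl M w d \<Longrightarrow> cr M d \<Longrightarrow> zr M w" by (simp add: cpl_def zr_def cr_def)
lemma zr_zr: "zr M w \<Longrightarrow> zr M z \<Longrightarrow> eqr M z w" by (simp add: eqr_def zr_def)
lemma cr_cr: "cr M w \<Longrightarrow> cr M z \<Longrightarrow> eqr M z w" by (simp add: eqr_def cr_def)
lemma zr_cr: "zr M w \<Longrightarrow> cr M z \<Longrightarrow> cpl M z w" by (simp add: cpl_def zr_def cr_def)
lemma cr_zr: "cr M w \<Longrightarrow> zr M z \<Longrightarrow> cpl M z w" by (simp add: cpl_def zr_def cr_def)

lemma adm_sw: assumes "adm M w" "adm M z" shows "adm (sw M w) z"
proof -
  let ?d = "dst M"
  from assms(1) have w: "w \<in> grd M" "eqr M w ?d \<or> cpl M w ?d \<or> ((zr M ?d \<or> cr M ?d) \<and> (zr M w \<or> cr M w))"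
    by (auto simp: adm_def)
  from assms(2) have z: "z \<in> grd M" "eqr M z ?d \<or> cpl M z ?d \<or> ((zr M ?d \<or> cr M ?d) \<and> (zr M z \<or> cr M z))"
    by (auto simp: adm_def)
  have "eqr M z w \<or> cpl M z w \<or> ((zr M w \<or> cr M w) \<and> (zr M z \<or> cr M z))"
    using w(2) z(2) 
    by (meson eqr_sym eqr_trans eqr_cpl cpl_eqr cpl_cpl eqr_zr eqr_cr cpl_zr cpl_cr zr_zr cr_cr zr_cr cr_zr)
  then show ?thesis using z by (simp add: adm_def)
qed

lemma adm_grd: "adm M x \<Longrightarrow> x \<in> grd M" by (simp add: adm_def)

lemma adm_dst: "is_sbm M \<Longrightarrow> adm M (dst M)" by (simp add: adm_def is_sbm_def eqr_def)

lemma adm_back: assumes "is_sbm M" "adm M x" "adm (sw M x) z" shows "adm M z"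
proof -
  have "adm (sw M x) (dst M)" using adm_sw[OF assms(2) adm_dst[OF assms(1)]] .
  from adm_sw[OF this assms(3)] show ?thesis by simp
qed

lemma adm_eqr: "is_sbm M \<Longrightarrow> adm M x \<Longrightarrow> eqr M z x \<Longrightarrow> z \<in> grd M \<Longrightarrow> adm M z"
  by (rule adm_back[of M x]) (auto simp: adm_def)
lemma adm_cpl: "is_sbm M \<Longrightarrow> adm M x \<Longrightarrow> cpl M z x \<Longrightarrow> z \<in> grd M \<Longrightarrow> adm M z"
  by (rule adm_back[of M x]) (auto simp: adm_def)
lemma adm_sng: assumes "is_sbm M" "adm M x" "zr M x \<or> cr M x" shows "adm M (sng M)"
proof (rule adm_back[OF assms(1,2)])
  have "cr M (sng M)" by (simp add: cr_def)
  moreover have "sng M \<in> grd M" using assms(1) by (simp add: is_sbm_def)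
  ultimately show "adm (sw M x) (sng M)" using assms(3) unfolding adm_def 
    by simp
qed

lemma skew_sub: "skew_on G b \<Longrightarrow> H \<subseteq> G \<Longrightarrow> skew_on H b"
  unfolding skew_on_def by blast

lemma is_sbm_sw: "is_sbm M \<Longrightarrow> x \<in> grd M \<Longrightarrow> is_sbm (sw M x)"
  by (simp add: is_sbm_def)

lemma is_sbm_rm: "is_sbm M \<Longrightarrow> sng M \<notin> X \<Longrightarrow> dst M \<notin> X \<Longrightarrow> is_sbm (rm M X)"
  unfolding is_sbm_def by (auto elim: skew_sub)

lemma is_sbm_rmsw: "is_sbm M \<Longrightarrow> x \<in> grd M \<Longrightarrow> sng M \<notin> X \<Longrightarrow> x \<notin> X \<Longrightarrow> is_sbm (rm (sw M x) X)"
  unfolding is_sbm_def by (auto elim: skew_sub)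

lemma red_sbm: "red M A \<Longrightarrow> is_sbm A \<and> is_sbm M"
  by (auto simp: red_def rmv_def intro!: is_sbm_rmsw adm_grd)

lemma asw_sbm: "asw M A \<Longrightarrow> is_sbm A \<and> is_sbm M"
  by (auto simp: asw_def intro!: is_sbm_sw adm_grd)

lemma asw_sym: "asw M M' \<Longrightarrow> asw M' M"
  unfolding asw_def
  by (metis adm_dst adm_grd adm_sw is_sbm_sw sw_dst sw_simps(5))

lemma iso_sym: assumes "sbm_iso M M'" shows "sbm_iso M' M"
proof -
  from assms obtain f where f: "bij_betw f (grd M) (grd M')" "f (sng M) = sng M'" "f (dst M) = dst M'"
    "\<forall>x\<in>grd M. \<forall>y\<in>grd M. frm M' (f x) (f y) = frm M x y" and s: "is_sbm M" "is_sbm M'"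
    by (auto simp: sbm_iso_def)
  let ?g = "inv_into (grd M) f"
  have "bij_betw ?g (grd M') (grd M)" using f(1) by (rule bij_betw_inv_into)
  moreover have "?g (sng M') = sng M" using f s
    by (metis bij_betw_imp_inj_on inv_into_f_f is_sbm_def)
  moreover have "?g (dst M') = dst M" using f s
    by (metis bij_betw_imp_inj_on inv_into_f_f is_sbm_def)
  moreover have "\<forall>x\<in>grd M'. \<forall>y\<in>grd M'. frm M (?g x) (?g y) = frm M' x y"
  proof (intro ballI)
    fix x y
    assume xy: "x \<in> grd M'" "y \<in> grd M'"
    have sur: "f ` grd M = grd M'" using f(1) by (simp add: bij_betw_def)
    have gx: "?g x \<in> grd M" "?g y \<in> grd M" using xy sur by (auto intro: inv_into_into)
    have fx: "f (?g x) = x" "f (?g y) = y" using xy sur by (auto intro: f_inv_into_f)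
    show "frm M (?g x) (?g y) = frm M' x y" using f(4) gx fx by metis
  qed
  ultimately show ?thesis using s unfolding sbm_iso_def by blast
qed

lemma iso_card: "sbm_iso M M' \<Longrightarrow> card (grd M) = card (grd M')"
  by (auto simp: sbm_iso_def intro: bij_betw_same_card)

lemma E1_sym: "E1 M M' \<Longrightarrow> E1 M' M"
  by (auto simp: E1_def intro: iso_sym asw_sym)

lemma E1_sbm: "E1 M M' \<Longrightarrow> is_sbm M \<and> is_sbm M'"
  by (auto simp: E1_def sbm_iso_def dest: asw_sbm)

lemma E1_card: "E1 M M' \<Longrightarrow> card (grd M') = card (grd M)"
  by (auto simp: E1_def asw_def dest: iso_card)

lemma eqv_sym: "eqv M M' \<Longrightarrow> eqv M' M"
proof (induction rule: rtranclp_induct)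
  case base then show ?case by simp
next
  case (step y z) then show ?case
    by (metis E1_sym converse_rtranclp_into_rtranclp)
qed

lemma eqv_card: "eqv M M' \<Longrightarrow> card (grd M') = card (grd M)"
  by (induction rule: rtranclp_induct) (auto dest: E1_card)

lemma eqv_sbm: "eqv M M' \<Longrightarrow> is_sbm M \<Longrightarrow> is_sbm M'"
  by (induction rule: rtranclp_induct) (auto dest: E1_sbm)

lemma red_card: assumes "red M A" shows "card (grd A) < card (grd M)"
proof -
  from assms obtain x X where "is_sbm M" "rmv M x X" "A = rm (sw M x) X" by (auto simp: red_def)
  then show ?thesis
    by (auto simp: rmv_def is_sbm_def intro!: psubset_card_mono)
qed

lemma RR_E1: "E1 a b \<Longrightarrow> RR a b" by (simp add: RR_def r_into_rtranclp)
lemma RR_red: "red a b \<Longrightarrow> RR a b" by (simp add: RR_def r_into_rtranclp)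
lemma RR_eqv: "eqv a b \<Longrightarrow> RR a b"
  unfolding RR_def by (induction rule: rtranclp_induct) (auto intro: rtranclp.rtrancl_into_rtrancl)
lemma RR_trans: "RR a b \<Longrightarrow> RR b c \<Longrightarrow> RR a c" by (simp add: RR_def)
lemma RR_refl: "RR a a" by (simp add: RR_def)

lemma rmv_rm: assumes "rmv M x Y" "Y \<inter> X = {}" shows "rmv (rm M X) x Y"
proof -
  from assms(1) have b: "Y \<subseteq> grd M" "sng M \<notin> Y" "x \<notin> Y" and
    c: "(\<exists>g. Y={g} \<and> (zr M g \<or> cr M g)) \<or> (\<exists>g1 g2. g1\<noteq>g2 \<and> Y={g1,g2} \<and> cpl M g1 g2)"
    by (auto simp: rmv_def)
  from c have "(\<exists>g. Y={g} \<and> (zr (rm M X) g \<or> cr (rm M X) g)) \<or> (\<exists>g1 g2. g1\<noteq>g2 \<and> Y={g1,g2} \<and> cpl (rm M X) g1 g2)"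
    using preds_rm by metis
  with b assms(2) show ?thesis unfolding rmv_def by auto
qed

lemma rmv_change: "rmv M y Y \<Longrightarrow> x \<notin> Y \<Longrightarrow> rmv M x Y"
  unfolding rmv_def by auto

lemma asw_rm: assumes "is_sbm M" "adm M x" "adm M z" "sng M \<notin> X" "x \<notin> X" "z \<notin> X"
  shows "asw (rm (sw M x) X) (rm (sw M z) X)"
proof -
  have "adm (sw M x) z" using adm_sw[OF assms(2,3)] .
  then have "adm (rm (sw M x) X) z" using assms(6) by (rule adm_rm)
  moreover have "is_sbm (rm (sw M x) X)" using assms by (auto intro: is_sbm_rmsw adm_grd)
  ultimately show ?thesis unfolding asw_def by (metis rm_simps(6) sw_simps(5))
qed

lemma route: assumes "is_sbm M" "adm M x" "rmv M x X" "adm M z" "z \<notin> X"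
  "Z = X \<or> (rmv M z W \<and> W \<inter> X = {} \<and> Z = X \<union> W)"
  shows "RR (rm (sw M x) X) (rm (sw M z) Z)"
proof -
  have s: "sng M \<notin> X" "x \<notin> X" using assms(3) by (auto simp: rmv_def)
  have 1: "RR (rm (sw M x) X) (rm (sw M z) X)"
    using asw_rm[OF assms(1,2,4) s assms(5)] by (intro RR_E1) (simp add: E1_def)
  show ?thesis
  proof (cases "Z = X")
    case True then show ?thesis using 1 by simp
  next
    case False
    with assms(6) have W: "rmv M z W" "W \<inter> X = {}" "Z = X \<union> W" by auto
    have sb: "is_sbm (rm (sw M z) X)" using assms s by (auto intro: is_sbm_rmsw adm_grd)
    have "red (rm (sw M z) X) (rm (sw M z) Z)"
      unfolding red_def
      apply (rule conjI[OF sb])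
      apply (rule exI[of _ z], rule exI[of _ W])
      apply (intro conjI)
        apply (metis adm_dst rm_simps(3) sb sw_simps(3))
       apply (rule rmv_rm) using W apply (simp_all)
      done
    then show ?thesis using 1 RR_trans RR_red by blast
  qed
qed

definition tr :: "nat \<Rightarrow> nat \<Rightarrow> nat \<Rightarrow> nat" where
  "tr a c x = (if x = a then c else if x = c then a else x)"

lemma tr_tr[simp]: "tr a c (tr a c x) = x" by (simp add: tr_def)
lemma tr_inj: "inj (tr a c)" by (metis injI tr_tr)
lemma tr_mem: "a \<in> G \<Longrightarrow> c \<in> G \<Longrightarrow> x \<in> G \<Longrightarrow> tr a c x \<in> G" by (simp add: tr_def)
lemma tr_other: "x \<noteq> a \<Longrightarrow> x \<noteq> c \<Longrightarrow> tr a c x = x" by (simp add: tr_def)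

lemma tr_eqr: "eqr M a c \<Longrightarrow> eqr M (tr a c x) x"
  by (auto simp: tr_def eqr_def)

lemma tr_auto: assumes "is_sbm M" "a \<in> grd M" "c \<in> grd M" "eqr M a c" "u \<in> grd M" "v \<in> grd M"
  shows "frm M (tr a c u) (tr a c v) = frm M u v"
proof -
  let ?b = "frm M"
  have sk: "\<And>x y. x \<in> grd M \<Longrightarrow> y \<in> grd M \<Longrightarrow> ?b x y = - ?b y x"
    using assms(1) unfolding is_sbm_def skew_on_def by blast
  have row: "\<And>h. h \<in> grd M \<Longrightarrow> ?b a h = ?b c h" using assms(4) by (simp add: eqr_def)
  have col: "?b h a = ?b h c" if h: "h \<in> grd M" for h
  proof -
    have "?b h a = - ?b a h" using sk[OF h assms(2)] .
    also have "\<dots> = - ?b c h" using row[OF h] by simp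
    also have "\<dots> = ?b h c" using sk[OF assms(3) h] by simp
    finally show ?thesis .
  qed
  have d2: "?b c a = ?b a c"
    using col[OF assms(3)] row[OF assms(3)] by simp
  have d1: "?b a a = ?b c c"
    using row[OF assms(2)] col[OF assms(3)] by simp
  show ?thesis
  proof (cases "a = c")
    case True then show ?thesis by (simp add: tr_def)
  next
    case False
    show ?thesis
      unfolding tr_def using assms(5,6) row col d1 d2 False
      by (auto simp: tr_def)
  qed
qed

lemma tr_iso: assumes "is_sbm M" "a \<in> grd M" "c \<in> grd M" "eqr M a c" "a \<noteq> sng M" "c \<noteq> sng M"
  "x \<in> grd M" "sng M \<notin> X" "x \<notin> X" "X \<subseteq> grd M"
  shows "sbm_iso (rm (sw M x) X) (rm (sw M (tr a c x)) (tr a c ` X))"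
proof -
  let ?t = "tr a c"
  have ts: "?t (sng M) = sng M" using assms(5,6) by (simp add: tr_def)
  have img: "?t ` (grd M - X) = grd M - ?t ` X"
  proof
    show "?t ` (grd M - X) \<subseteq> grd M - ?t ` X"
      using assms(2,3) tr_inj[of a c] by (auto intro: tr_mem dest: injD)
  next
    show "grd M - ?t ` X \<subseteq> ?t ` (grd M - X)"
    proof
      fix y assume y: "y \<in> grd M - ?t ` X"
      then have "?t y \<in> grd M - X" using assms(2,3) by (auto intro: tr_mem) (metis image_eqI tr_tr)
      then show "y \<in> ?t ` (grd M - X)" by (metis image_eqI tr_tr)
    qed
  qed
  have bij: "bij_betw ?t (grd M - X) (grd M - ?t ` X)"
    using img tr_inj[of a c] by (simp add: bij_betw_def inj_on_def inj_def)
  have s1: "is_sbm (rm (sw M x) X)" using assms by (intro is_sbm_rmsw)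
  have s2: "is_sbm (rm (sw M (?t x)) (?t ` X))"
  proof (rule is_sbm_rmsw[OF assms(1)])
    show "?t x \<in> grd M" using assms by (intro tr_mem)
    show "sng M \<notin> ?t ` X" using assms(8) ts tr_inj[of a c] by (metis image_iff tr_tr)
    show "?t x \<notin> ?t ` X" using assms(9) by (metis image_iff tr_tr)
  qed
  show ?thesis unfolding sbm_iso_def
    apply (intro conjI s1 s2)
    apply (rule exI[of _ ?t])
    using bij ts tr_auto[OF assms(1-4)] by auto
qed

lemma RR_iso: "sbm_iso a b \<Longrightarrow> RR a b" by (intro RR_E1) (simp add: E1_def)
lemma RR_asw: "asw a b \<Longrightarrow> RR a b" by (intro RR_E1) (simp add: E1_def)

lemma J_sym: "J A B \<Longrightarrow> J B A" by (auto simp: J_def)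
lemma J_RR: "RR A B \<Longrightarrow> J A B" using RR_refl by (auto simp: J_def)

lemma rmv_cases: "rmv M z X \<Longrightarrow> (\<exists>g. X={g} \<and> (zr M g \<or> cr M g)) \<or> (\<exists>g1 g2. g1\<noteq>g2 \<and> X={g1,g2} \<and> cpl M g1 g2)"
  by (simp add: rmv_def)

lemma pair_at: "g1\<noteq>g2 \<Longrightarrow> X={g1,g2} \<Longrightarrow> cpl M g1 g2 \<Longrightarrow> g \<in> X \<Longrightarrow> \<exists>h. h\<noteq>g \<and> X={g,h} \<and> cpl M g h"
  by (metis cpl_sym empty_iff insert_commute insert_iff)

lemma zr_cr_cpl: "cpl M g h \<Longrightarrow> zr M g \<or> cr M g \<Longrightarrow> zr M h \<or> cr M h"
  by (meson cpl_sym cpl_zr cpl_cr)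

lemma pairLC: assumes "is_sbm M" "adm M x" "rmv M x X" "adm M y" "rmv M y Y"
  "X = {g,h1}" "Y = {g,h2}" "h1 \<noteq> h2" "g \<noteq> h1" "g \<noteq> h2" "cpl M g h1" "cpl M g h2"
  shows "RR (rm (sw M x) X) (rm (sw M y) Y)"
proof -
  let ?t = "tr h1 h2"
  have e: "eqr M h1 h2" using cpl_cpl[OF cpl_sym[OF assms(12)] cpl_sym[OF assms(11)]] .
  have X: "X \<subseteq> grd M" "sng M \<notin> X" "x \<notin> X" using assms(3) by (auto simp: rmv_def)
  have Y: "Y \<subseteq> grd M" "sng M \<notin> Y" "y \<notin> Y" using assms(5) by (auto simp: rmv_def)
  have tX: "?t ` X = Y" using assms(6-10) by (auto simp: tr_def)
  have i1: "sbm_iso (rm (sw M x) X) (rm (sw M (?t x)) Y)"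
    using tr_iso[OF assms(1) _ _ e _ _ adm_grd[OF assms(2)] X(2,3,1)] X Y assms(6,7) tX by auto
  have tx: "?t x \<notin> Y" using X(3) tX by (metis image_iff tr_tr)
  have at: "adm M (?t x)"
    using adm_eqr[OF assms(1,2) tr_eqr[OF e]] tr_mem assms(6,7) X Y adm_grd[OF assms(2)] by auto
  have "asw (rm (sw M (?t x)) Y) (rm (sw M y) Y)"
    using asw_rm[OF assms(1) at assms(4) Y(2) tx Y(3)] .
  then show ?thesis using i1 RR_iso RR_asw RR_trans by blast
qed

lemma singlepairLC: assumes "is_sbm M" "adm M x" "rmv M x X" "adm M y" "rmv M y Y"
  "X = {g}" "Y = {g,h}" "g \<noteq> h" "zr M g \<or> cr M g" "cpl M g h"
  shows "J (rm (sw M x) X) (rm (sw M y) Y)"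
proof -
  have X: "X \<subseteq> grd M" "sng M \<notin> X" "x \<notin> X" using assms(3) by (auto simp: rmv_def)
  have Y: "Y \<subseteq> grd M" "sng M \<notin> Y" "y \<notin> Y" using assms(5) by (auto simp: rmv_def)
  have h: "zr M h \<or> cr M h" using zr_cr_cpl[OF assms(10,9)] .
  define z where "z = (if x = h then sng M else x)"
  have az: "adm M z"
    using assms(2) adm_sng[OF assms(1) _ h] unfolding z_def by auto
  have zX: "z \<notin> X" "z \<notin> Y" using X Y assms(6,7) unfolding z_def by auto
  have rz: "rmv M z {h}" using h zX Y assms(7) unfolding rmv_def by auto
  have 1: "RR (rm (sw M x) X) (rm (sw M z) Y)"
    using route[OF assms(1-3) az zX(1), of Y "{h}"] rz assms(6-8) by (auto simp: insert_commute)
  have 2: "RR (rm (sw M y) Y) (rm (sw M z) Y)"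
    using route[OF assms(1) assms(4,5) az zX(2), of Y] by auto
  show ?thesis using 1 2 by (auto simp: J_def)
qed

lemma disjLC: assumes "is_sbm M" "adm M x" "rmv M x X" "adm M y" "rmv M y Y" "X \<inter> Y = {}"
  shows "J (rm (sw M x) X) (rm (sw M y) Y)"
proof (cases "\<exists>z. adm M z \<and> z \<notin> X \<and> z \<notin> Y")
  case True
  then obtain z where z: "adm M z" "z \<notin> X" "z \<notin> Y" by blast
  have 1: "RR (rm (sw M x) X) (rm (sw M z) (X \<union> Y))"
    using route[OF assms(1-3) z(1,2), of "X \<union> Y" Y] rmv_change[OF assms(5) z(3)] assms(6) by auto
  have 2: "RR (rm (sw M y) Y) (rm (sw M z) (X \<union> Y))"
    using route[OF assms(1) assms(4,5) z(1,3), of "X \<union> Y" X] rmv_change[OF assms(3) z(2)] assms(6)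
    by (auto simp: Un_commute Int_commute)
  show ?thesis using 1 2 by (auto simp: J_def)
next
  case False
  have X: "X \<subseteq> grd M" "sng M \<notin> X" "x \<notin> X" using assms(3) by (auto simp: rmv_def)
  have Y: "Y \<subseteq> grd M" "sng M \<notin> Y" "y \<notin> Y" using assms(5) by (auto simp: rmv_def)
  have xY: "x \<in> Y" using False assms(2) X by auto
  have yX: "y \<in> X" using False assms(4) Y by auto
  have nsng: "\<not> adm M (sng M)" using False X Y by auto
  have nx: "\<not> (zr M x \<or> cr M x)" using adm_sng[OF assms(1,2)] nsng by blast
  have ny: "\<not> (zr M y \<or> cr M y)" using adm_sng[OF assms(1,4)] nsng by blast
  obtain x' where x': "x' \<noteq> x" "Y = {x,x'}" "cpl M x x'"
    using rmv_cases[OF assms(5)] xY nx pair_at by blast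
  obtain y' where y': "y' \<noteq> y" "X = {y,y'}" "cpl M y y'"
    using rmv_cases[OF assms(3)] yX ny pair_at by blast
  have dist: "x \<noteq> y" "x \<noteq> y'" "x' \<noteq> y" "x' \<noteq> y'" using assms(6) x' y' by auto
  have G: "x \<in> grd M" "x' \<in> grd M" "y \<in> grd M" "y' \<in> grd M" using X Y x' y' by auto
  have ns: "x \<noteq> sng M" "x' \<noteq> sng M" "y \<noteq> sng M" "y' \<noteq> sng M" using X Y x' y' by auto
  have "adm (sw M x) y" using adm_sw[OF assms(2,4)] .
  then have c: "eqr M y x \<or> cpl M y x" using nx unfolding adm_def by auto
  show ?thesis
  proof (cases "eqr M y x")
    case True
    have e1: "eqr M x y" using True by (rule eqr_sym)
    have "cpl M y' x" using eqr_cpl[OF e1 cpl_sym[OF y'(3)]] .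
    then have e2: "eqr M x' y'" using cpl_cpl[OF _ cpl_sym[OF x'(3)]] by blast
    have i1: "sbm_iso (rm (sw M x) X) (rm (sw M (tr x y x)) (tr x y ` X))"
      by (rule tr_iso[OF assms(1) G(1,3) e1 ns(1,3) G(1) X(2,3,1)])
    have t1: "tr x y x = y" "tr x y ` X = {x, y'}" using y' dist by (auto simp: tr_def)
    have X2: "sng M \<notin> {x,y'}" "y \<notin> {x,y'}" "{x,y'} \<subseteq> grd M" using ns G dist y' by auto
    have i2: "sbm_iso (rm (sw M y) {x,y'}) (rm (sw M (tr x' y' y)) (tr x' y' ` {x,y'}))"
      by (rule tr_iso[OF assms(1) G(2,4) e2 ns(2,4) G(3) X2])
    have t2: "tr x' y' y = y" "tr x' y' ` {x,y'} = Y" using x' y' dist by (auto simp: tr_def)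
    show ?thesis using i1 i2 t1 t2 by (auto intro!: J_RR intro: RR_trans RR_iso)
  next
    case False
    with c have cy: "cpl M y x" by simp
    have e1: "eqr M x y'" using eqr_sym[OF cpl_cpl[OF cpl_sym[OF cy] cpl_sym[OF y'(3)]]] .
    have e2: "eqr M x' y" using cpl_cpl[OF cy cpl_sym[OF x'(3)]] .
    have i1: "sbm_iso (rm (sw M x) X) (rm (sw M (tr x y' x)) (tr x y' ` X))"
      by (rule tr_iso[OF assms(1) G(1,4) e1 ns(1,4) G(1) X(2,3,1)])
    have t1: "tr x y' x = y'" "tr x y' ` X = {y, x}" using y' dist by (auto simp: tr_def)
    have X2: "sng M \<notin> {y,x}" "y' \<notin> {y,x}" "{y,x} \<subseteq> grd M" using ns G dist y' by auto
    have i2: "sbm_iso (rm (sw M y') {y,x}) (rm (sw M (tr x' y y')) (tr x' y ` {y,x}))"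
      by (rule tr_iso[OF assms(1) G(2,3) e2 ns(2,3) G(4) X2])
    have t2: "tr x' y y' = y'" "tr x' y ` {y,x} = Y" using x' y' dist by (auto simp: tr_def)
    have ay': "adm M y'" using adm_cpl[OF assms(1,4) cpl_sym[OF y'(3)] G(4)] .
    have y'Y: "y' \<notin> Y" using x' dist by auto
    have "asw (rm (sw M y') Y) (rm (sw M y) Y)" using asw_rm[OF assms(1) ay' assms(4) Y(2) y'Y Y(3)] .
    then show ?thesis using i1 i2 t1 t2 by (metis J_RR RR_trans RR_iso RR_asw)
  qed
qed

lemma LC: assumes "red M A" "red M B" shows "J A B"
proof -
  from assms obtain x X y Y where M: "is_sbm M" and x: "adm M x" "rmv M x X" "A = rm (sw M x) X"
    and y: "adm M y" "rmv M y Y" "B = rm (sw M y) Y" by (auto simp: red_def)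
  show ?thesis
  proof (cases "X \<inter> Y = {}")
    case True then show ?thesis using disjLC[OF M x(1,2) y(1,2)] x y by simp
  next
    case ne: False
    then obtain g where g: "g \<in> X" "g \<in> Y" by blast
    show ?thesis
    proof (cases "X = Y")
      case True
      have "RR A B" using route[OF M x(1,2) y(1), of X] y(2) x(3) y(3) True by (auto simp: rmv_def)
      then show ?thesis by (rule J_RR)
    next
      case neq: False
      consider (ss) "\<exists>a. X = {a} \<and> (zr M a \<or> cr M a)" "\<exists>a. Y = {a} \<and> (zr M a \<or> cr M a)"
        | (sp) "\<exists>a. X = {a} \<and> (zr M a \<or> cr M a)" "\<exists>g1 g2. g1\<noteq>g2 \<and> Y={g1,g2} \<and> cpl M g1 g2"
        | (ps) "\<exists>g1 g2. g1\<noteq>g2 \<and> X={g1,g2} \<and> cpl M g1 g2" "\<exists>a. Y = {a} \<and> (zr M a \<or> cr M a)"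
        | (pp) "\<exists>g1 g2. g1\<noteq>g2 \<and> X={g1,g2} \<and> cpl M g1 g2" "\<exists>g1 g2. g1\<noteq>g2 \<and> Y={g1,g2} \<and> cpl M g1 g2"
        using rmv_cases[OF x(2)] rmv_cases[OF y(2)] by blast
      then show ?thesis
      proof cases
        case ss then show ?thesis using g neq by auto
      next
        case sp
        then obtain a where a: "X = {a}" "zr M a \<or> cr M a" by blast
        from sp(2) obtain h where h: "h \<noteq> a" "Y = {a,h}" "cpl M a h" using pair_at g a by blast
        show ?thesis using singlepairLC[OF M x(1,2) y(1,2) a(1) h(2) h(1)[symmetric] a(2) h(3)] x y by simp
      next
        case ps
        then obtain a where a: "Y = {a}" "zr M a \<or> cr M a" by blast
        from ps(1) obtain h where h: "h \<noteq> a" "X = {a,h}" "cpl M a h" using pair_at g a by blast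
        show ?thesis using singlepairLC[OF M y(1,2) x(1,2) a(1) h(2) h(1)[symmetric] a(2) h(3)] x y
          by (simp add: J_sym)
      next
        case pp
        from pp(1) obtain h1 where h1: "h1 \<noteq> g" "X = {g,h1}" "cpl M g h1" using pair_at g by blast
        from pp(2) obtain h2 where h2: "h2 \<noteq> g" "Y = {g,h2}" "cpl M g h2" using pair_at g by blast
        have "h1 \<noteq> h2" using h1 h2 neq by auto
        then show ?thesis
          using pairLC[OF M x(1,2) y(1,2) h1(2) h2(2) _ h1(1)[symmetric] h2(1)[symmetric] h1(3) h2(3)] x y
          by (simp add: J_RR)
      qed
    qed
  qed
qed

lemma isoE: assumes "sbm_iso M M'"
  obtains f where "bij_betw f (grd M) (grd M')" "f (sng M) = sng M'" "f (dst M) = dst M'"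
    "\<And>x y. x \<in> grd M \<Longrightarrow> y \<in> grd M \<Longrightarrow> frm M' (f x) (f y) = frm M x y" "is_sbm M" "is_sbm M'"
  using assms unfolding sbm_iso_def by blast

lemma all_img: "bij_betw f G G' \<Longrightarrow> (\<And>h. h \<in> G \<Longrightarrow> P (f h)) \<Longrightarrow> \<forall>h'\<in>G'. P h'"
  by (metis bij_betw_imp_surj_on imageE)

context
  fixes M M' :: "('h::ab_group_add) sbm" and f
  assumes bj: "bij_betw f (grd M) (grd M')" and fs: "f (sng M) = sng M'"
    and fb: "\<And>x y. x \<in> grd M \<Longrightarrow> y \<in> grd M \<Longrightarrow> frm M' (f x) (f y) = frm M x y"
    and sM: "is_sbm M"
begin

lemma fmem: "x \<in> grd M \<Longrightarrow> f x \<in> grd M'" using bj by (auto simp: bij_betw_def)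

lemma zr_tr: "x \<in> grd M \<Longrightarrow> zr M x \<Longrightarrow> zr M' (f x)"
  unfolding zr_def by (rule all_img[OF bj]) (simp add: fb)
lemma cr_tr: "x \<in> grd M \<Longrightarrow> cr M x \<Longrightarrow> cr M' (f x)"
  unfolding cr_def apply (rule all_img[OF bj])
  using fb sM fs by (metis is_sbm_def)
lemma eqr_tr: "x \<in> grd M \<Longrightarrow> y \<in> grd M \<Longrightarrow> eqr M x y \<Longrightarrow> eqr M' (f x) (f y)"
  unfolding eqr_def by (rule all_img[OF bj]) (simp add: fb)
lemma cpl_tr: "x \<in> grd M \<Longrightarrow> y \<in> grd M \<Longrightarrow> cpl M x y \<Longrightarrow> cpl M' (f x) (f y)"
  unfolding cpl_def apply (rule all_img[OF bj])
  using fb sM fs by (metis is_sbm_def)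

lemma adm_tr: assumes "f (dst M) = dst M'" "adm M x" shows "adm M' (f x)"
proof -
  have d: "dst M \<in> grd M" using sM by (simp add: is_sbm_def)
  have x: "x \<in> grd M" using assms(2) by (simp add: adm_def)
  show ?thesis using assms(2) unfolding adm_def
    using fmem[OF x] eqr_tr[OF x d] cpl_tr[OF x d] zr_tr[OF x] cr_tr[OF x] zr_tr[OF d] cr_tr[OF d] assms(1)
    by auto
qed

lemma rmv_tr: assumes "x \<in> grd M" "rmv M x X" shows "rmv M' (f x) (f ` X)"
proof -
  have X: "X \<subseteq> grd M" "sng M \<notin> X" "x \<notin> X" using assms(2) by (auto simp: rmv_def)
  have inj: "inj_on f (grd M)" using bj by (simp add: bij_betw_def)
  have s: "sng M \<in> grd M" using sM by (simp add: is_sbm_def)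
  have 1: "f ` X \<subseteq> grd M'" using X fmem by auto
  have 2: "sng M' \<notin> f ` X" using X s inj fs by (metis inj_on_image_mem_iff)
  have 3: "f x \<notin> f ` X" using X assms(1) inj by (metis inj_on_image_mem_iff)
  have 4: "(\<exists>g. f ` X = {g} \<and> (zr M' g \<or> cr M' g)) \<or> (\<exists>g1 g2. g1 \<noteq> g2 \<and> f ` X = {g1,g2} \<and> cpl M' g1 g2)"
  proof (cases "\<exists>g. X = {g} \<and> (zr M g \<or> cr M g)")
    case True
    then obtain g where "X = {g}" "zr M g \<or> cr M g" by blast
    then show ?thesis using zr_tr cr_tr X(1) by auto
  next
    case False
    then obtain g1 g2 where g: "g1 \<noteq> g2" "X = {g1,g2}" "cpl M g1 g2" using assms(2) by (auto simp: rmv_def)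
    have "f g1 \<noteq> f g2" using g X inj by (auto dest: inj_onD)
    then show ?thesis using g cpl_tr X(1) by auto
  qed
  show ?thesis using 1 2 3 4 by (simp add: rmv_def)
qed

lemma iso_rmsw: assumes "is_sbm M'" "x \<in> grd M" "X \<subseteq> grd M" "sng M \<notin> X" "x \<notin> X"
  shows "sbm_iso (rm (sw M x) X) (rm (sw M' (f x)) (f ` X))"
proof -
  have inj: "inj_on f (grd M)" using bj by (simp add: bij_betw_def)
  have s: "sng M \<in> grd M" using sM by (simp add: is_sbm_def)
  have b2: "bij_betw f (grd M - X) (grd M' - f ` X)"
    apply (rule bij_betw_DiffI[OF bj])
    using bj assms(3) fmem by (auto intro: bij_betw_subset)
  have s1: "is_sbm (rm (sw M x) X)" using sM assms by (intro is_sbm_rmsw)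
  have s2: "is_sbm (rm (sw M' (f x)) (f ` X))"
  proof (rule is_sbm_rmsw[OF assms(1)])
    show "f x \<in> grd M'" using fmem assms(2) .
    show "sng M' \<notin> f ` X" using assms(3,4) s inj fs by (metis inj_on_image_mem_iff)
    show "f x \<notin> f ` X" using assms(2,3,5) inj by (metis inj_on_image_mem_iff)
  qed
  show ?thesis unfolding sbm_iso_def
    apply (intro conjI s1 s2)
    apply (rule exI[of _ f])
    using b2 fs fb by auto
qed

end

lemma iso_red: assumes "sbm_iso M M'" "red M A" shows "\<exists>A'. red M' A' \<and> sbm_iso A A'"
proof -
  obtain f where f: "bij_betw f (grd M) (grd M')" "f (sng M) = sng M'" "f (dst M) = dst M'"
    "\<And>x y. x \<in> grd M \<Longrightarrow> y \<in> grd M \<Longrightarrow> frm M' (f x) (f y) = frm M x y" "is_sbm M" "is_sbm M'"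
    using isoE[OF assms(1)] by metis
  from assms(2) obtain x X where x: "adm M x" "rmv M x X" "A = rm (sw M x) X" by (auto simp: red_def)
  have xg: "x \<in> grd M" using x(1) by (simp add: adm_def)
  have X: "X \<subseteq> grd M" "sng M \<notin> X" "x \<notin> X" using x(2) by (auto simp: rmv_def)
  have "red M' (rm (sw M' (f x)) (f ` X))"
    unfolding red_def using f(6) adm_tr[OF f(1,2,4,5,3) x(1)] rmv_tr[OF f(1,2,4,5) xg x(2)] by blast
  moreover have "sbm_iso A (rm (sw M' (f x)) (f ` X))"
    using iso_rmsw[OF f(1,2,4,5,6) xg X] x(3) by simp
  ultimately show ?thesis by blast
qed

lemma asw_red: assumes "asw M M'" "red M' B" shows "red M B"
proof -
  from assms(1) obtain z where z: "is_sbm M" "adm M z" "M' = sw M z" by (auto simp: asw_def)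
  from assms(2) obtain x X where x: "adm M' x" "rmv M' x X" "B = rm (sw M' x) X" by (auto simp: red_def)
  have "adm M x" using adm_back[OF z(1,2)] x(1) z(3) by simp
  then show ?thesis unfolding red_def using z x by auto
qed

lemma E1_red: assumes "E1 M M'" "red M' B" shows "\<exists>A. red M A \<and> RR A B"
proof (cases "sbm_iso M M'")
  case True
  then obtain A where "red M A" "sbm_iso B A" using iso_red[OF iso_sym[OF True] assms(2)] by blast
  then show ?thesis using RR_iso iso_sym by blast
next
  case False
  then have "asw M M'" using assms(1) by (simp add: E1_def)
  then show ?thesis using asw_red assms(2) RR_refl by blast
qed

lemma eqv_red: assumes "eqv M M'" "red M' B" shows "\<exists>A. red M A \<and> RR A B"
  using assms
proof (induction arbitrary: B rule: rtranclp_induct)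
  case base then show ?case using RR_refl by blast
next
  case (step y z)
  obtain A'' where "red y A''" "RR A'' B" using E1_red[OF step(2,4)] by blast
  then show ?case using step(3) RR_trans by blast
qed

lemma normal_eqv: "normal N \<Longrightarrow> eqv N N' \<Longrightarrow> normal N'"
  unfolding normal_def using eqv_red eqv_sbm by blast

lemma RR_sbm: "RR M N \<Longrightarrow> is_sbm M \<Longrightarrow> is_sbm N"
  unfolding RR_def by (induction rule: rtranclp_induct) (auto dest: E1_sbm red_sbm)

lemma dec: "RR M N \<Longrightarrow> eqv M N \<or> (\<exists>A. red M A \<and> RR A N)"
  unfolding RR_def
proof (induction rule: converse_rtranclp_induct)
  case base then show ?case by simp
next
  case (step y z)
  show ?case
  proof (cases "red y z")
    case True then show ?thesis using step(2) by (auto simp: RR_def)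
  next
    case False
    then have e: "E1 y z" using step(1) by simp
    from step(3) show ?thesis
    proof
      assume "eqv z N" then show ?thesis using e by (simp add: converse_rtranclp_into_rtranclp)
    next
      assume "\<exists>A. red z A \<and> (\<lambda>a b. E1 a b \<or> red a b)\<^sup>*\<^sup>* A N"
      then obtain A where "red z A" "RR A N" by (auto simp: RR_def)
      then show ?thesis using E1_red[OF e] RR_trans unfolding RR_def by blast
    qed
  qed
qed

lemma normal_RR: "normal M \<Longrightarrow> RR M N \<Longrightarrow> eqv M N"
  using dec unfolding normal_def by blast

lemma exists_nf: "is_sbm M \<Longrightarrow> \<exists>N. normal N \<and> RR M N"
proof (induction "card (grd M)" arbitrary: M rule: less_induct)
  case less
  show ?case
  proof (cases "normal M")
    case True then show ?thesis using RR_refl by blast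
  next
    case False
    then obtain A where A: "red M A" using less(2) by (auto simp: normal_def)
    then obtain N where "normal N" "RR A N"
      using less(1)[OF red_card[OF A]] red_sbm[OF A] by blast
    then show ?thesis using A RR_red RR_trans by blast
  qed
qed

theorem U: "is_sbm M \<Longrightarrow> RR M N1 \<Longrightarrow> normal N1 \<Longrightarrow> RR M N2 \<Longrightarrow> normal N2 \<Longrightarrow> eqv N1 N2"
proof (induction "card (grd M)" arbitrary: M N1 N2 rule: less_induct)
  case less
  note IH = less(1)
  show ?case
  proof (cases "eqv M N1 \<or> eqv M N2")
    case True
    then show ?thesis
    proof
      assume e: "eqv M N1"
      have "normal M" by (rule normal_eqv[OF less(4) eqv_sym[OF e]])
      then have "eqv M N2" using normal_RR less(5) by blast
      then show ?thesis using e eqv_sym by (meson rtranclp_trans)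
    next
      assume e: "eqv M N2"
      have "normal M" by (rule normal_eqv[OF less(6) eqv_sym[OF e]])
      then have "eqv M N1" using normal_RR less(3) by blast
      then show ?thesis using e eqv_sym by (meson rtranclp_trans)
    qed
  next
    case False
    then obtain A B where A: "red M A" "RR A N1" and B: "red M B" "RR B N2"
      using dec[OF less(3)] dec[OF less(5)] by blast
    obtain C where C: "RR A C" "RR B C" using LC[OF A(1) B(1)] by (auto simp: J_def)
    have sA: "is_sbm A" "is_sbm B" using red_sbm A B by auto
    obtain N0 where N0: "normal N0" "RR C N0" using exists_nf RR_sbm[OF C(1) sA(1)] by blast
    have 1: "eqv N1 N0" using IH[OF red_card[OF A(1)] sA(1) A(2) less(4) RR_trans[OF C(1) N0(2)] N0(1)] .
    have 2: "eqv N2 N0" using IH[OF red_card[OF B(1)] sA(2) B(2) less(6) RR_trans[OF C(2) N0(2)] N0(1)] .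
    show ?thesis using 1 eqv_sym[OF 2] by (meson rtranclp_trans)
  qed
qed


lemma ss_asw: assumes "sing_switch M M'" shows "asw M M'"
proof -
  from assms obtain g where g: "is_sbm M" "g \<in> grd M"
    "\<forall>h\<in>grd M. frm M g h + frm M (dst M) h = frm M (sng M) h" "M' = M\<lparr>dst := g\<rparr>"
    by (auto simp: sing_switch_def)
  have "adm M g" using g(2,3) by (simp add: adm_def cpl_def)
  then show ?thesis using g by (auto simp: asw_def sw_def)
qed

lemma ss_sbm: "sing_switch M M' \<Longrightarrow> is_sbm M \<and> is_sbm M'"
  using ss_asw asw_sbm by blast

lemma switch_rel_eqv: "switch_rel M1 M \<Longrightarrow> eqv M1 M"
  unfolding switch_rel_def
  by (induction rule: rtranclp_induct) (auto simp: E1_def dest: ss_asw intro: rtranclp.rtrancl_into_rtrancl)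

lemma iso_id: assumes "is_sbm A" "is_sbm (rm M X)" "sng M = sng A" "dst M = dst A" "grd M - X = grd A"
  "extends_on (grd A) (frm A) (frm M)" shows "sbm_iso (rm M X) A"
  unfolding sbm_iso_def using assms
  by (auto simp: extends_on_def intro!: exI[of _ id])

lemma elem_red: assumes "elem_ext A M" shows "\<exists>B. red M B \<and> sbm_iso B A"
proof -
  have sA: "is_sbm A" and sM: "is_sbm M" and sd: "sng M = sng A" "dst M = dst A"
    and ex: "extends_on (grd A) (frm A) (frm M)"
    using assms by (auto simp: elem_ext_def move1_def move2_def move3_def)
  have sg: "sng A \<in> grd A" "dst A \<in> grd A" using sA by (auto simp: is_sbm_def)
  from assms obtain X where X: "rmv M (dst M) X" "grd M - X = grd A"
  proof (unfold elem_ext_def, elim disjE)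
    assume "move1 A M"
    then obtain g where g: "g \<notin> grd A" "grd M = insert g (grd A)" "\<forall>h\<in>grd M. frm M g h = 0"
      by (auto simp: move1_def)
    have "rmv M (dst M) {g}" using g sg sd by (auto simp: rmv_def zr_def)
    moreover have "grd M - {g} = grd A" using g by auto
    ultimately show ?thesis using that by blast
  next
    assume "move2 A M"
    then obtain g where g: "g \<notin> grd A" "grd M = insert g (grd A)" "\<forall>h\<in>grd M. frm M g h = frm M (sng A) h"
      by (auto simp: move2_def)
    have "rmv M (dst M) {g}" using g sg sd by (auto simp: rmv_def cr_def)
    moreover have "grd M - {g} = grd A" using g by auto
    ultimately show ?thesis using that by blast
  next
    assume "move3 A M"
    then obtain gi gj where g: "gi \<notin> grd A" "gj \<notin> grd A" "gi \<noteq> gj" "grd M = insert gi (insert gj (grd A))"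
      "\<forall>h\<in>grd M. frm M gi h + frm M gj h = frm M (sng A) h"
      by (auto simp: move3_def)
    have "rmv M (dst M) {gi,gj}" using g sg sd by (auto simp: rmv_def cpl_def)
    moreover have "grd M - {gi,gj} = grd A" using g by auto
    ultimately show ?thesis using that by blast
  qed
  have r: "red M (rm M X)" unfolding red_def using sM X adm_dst[OF sM] by (metis sw_dst)
  have "is_sbm (rm M X)" using red_sbm[OF r] by simp
  then have "sbm_iso (rm M X) A" using iso_id[OF sA _ sd X(2) ex] by simp
  then show ?thesis using r by blast
qed

lemma normal_primitive: assumes "normal N" shows "primitive N"
proof -
  have "\<not> (\<exists>M0 M1. elem_ext M0 M1 \<and> (switch_rel M1 N \<or> sbm_iso M1 N))"
  proof
    assume "\<exists>M0 M1. elem_ext M0 M1 \<and> (switch_rel M1 N \<or> sbm_iso M1 N)"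
    then obtain M0 M1 where m: "elem_ext M0 M1" "switch_rel M1 N \<or> sbm_iso M1 N" by blast
    have "eqv M1 N" using m(2) switch_rel_eqv by (auto simp: E1_def)
    then have "eqv N M1" by (rule eqv_sym)
    moreover obtain B where "red M1 B" using elem_red[OF m(1)] by blast
    ultimately show False using eqv_red assms by (auto simp: normal_def)
  qed
  then show ?thesis using assms by (simp add: primitive_def normal_def)
qed

abbreviation hs where "hs \<equiv> hom_step\<^sup>*\<^sup>*"

lemma hs_sw: "is_sbm X \<Longrightarrow> g \<in> grd X \<Longrightarrow> cpl X g (dst X) \<Longrightarrow> hom_step X (sw X g)"
  by (auto simp: hom_step_def sing_switch_def cpl_def sw_def)

lemma rmv_elem: assumes "is_sbm M" "rmv M (dst M) X" shows "elem_ext (rm M X) M"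
proof -
  have X: "X \<subseteq> grd M" "sng M \<notin> X" "dst M \<notin> X" using assms(2) by (auto simp: rmv_def)
  have s: "is_sbm (rm M X)" using is_sbm_rm[OF assms(1) X(2,3)] .
  show ?thesis
  proof (cases "\<exists>g. X = {g} \<and> zr M g")
    case True
    then obtain g where "X = {g}" "zr M g" by blast
    then have "move1 (rm M X) M" using s assms(1) X
      by (auto simp: move1_def zr_def extends_on_def)
    then show ?thesis by (simp add: elem_ext_def)
  next
    case F1: False
    show ?thesis
    proof (cases "\<exists>g. X = {g} \<and> cr M g")
      case True
      then obtain g where "X = {g}" "cr M g" by blast
      then have "move2 (rm M X) M" using s assms(1) X
        by (auto simp: move2_def cr_def extends_on_def)
      then show ?thesis by (simp add: elem_ext_def)
    next
      case False
      then obtain g1 g2 where "g1 \<noteq> g2" "X = {g1,g2}" "cpl M g1 g2" using F1 assms(2)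
        by (auto simp: rmv_def)
      then have "move3 (rm M X) M" using s assms(1) X
        unfolding move3_def cpl_def extends_on_def
        by (intro conjI exI[of _ g1] exI[of _ g2]) auto
      then show ?thesis by (simp add: elem_ext_def)
    qed
  qed
qed

definition addz :: "('h::ab_group_add) sbm \<Rightarrow> nat \<Rightarrow> 'h sbm" where
  "addz M a = M\<lparr>grd := insert a (grd M), frm := (\<lambda>x y. if x = a \<or> y = a then 0 else frm M x y)\<rparr>"

lemma skz: assumes sN: "is_sbm N" shows "skew_on (insert a (grd N)) (\<lambda>x y. if x = a \<or> y = a then 0 else frm N x y)"
    unfolding skew_on_def
  proof (intro ballI)
    fix x y assume xy: "x \<in> insert a (grd N)" "y \<in> insert a (grd N)"
    show "(if x = a \<or> y = a then 0 else frm N x y) = - (if y = a \<or> x = a then 0 else frm N y x)"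
    proof (cases "x = a \<or> y = a")
      case True then show ?thesis by auto
    next
      case False
      then have "frm N x y = - frm N y x" using sN xy unfolding is_sbm_def skew_on_def by blast
      then show ?thesis using False by simp
    qed
  qed

lemma addz_chain: assumes sM: "is_sbm M" and z: "z \<in> grd M"
  and d: "zr M (dst M) \<or> cr M (dst M)" and zz: "zr M z \<or> cr M z"
  shows "hs M (sw M z)"
proof -
  obtain a where a: "a \<notin> grd M" using sM by (meson ex_new_if_finite infinite_UNIV_nat is_sbm_def)
  let ?Ma = "addz M a"
  have sg: "sng M \<in> grd M" "dst M \<in> grd M" using sM by (auto simp: is_sbm_def)
  have sMa: "is_sbm ?Ma" using sM skz[OF sM] unfolding is_sbm_def addz_def by auto
  have m1: "move1 M ?Ma" using sM sMa a unfolding move1_def addz_def extends_on_def by auto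
  have sw_addz: "sw ?Ma z = addz (sw M z) a" by (rule sbm.equality) (simp_all add: addz_def fun_eq_iff)
  have sMz: "is_sbm (sw M z)" using is_sbm_sw[OF sM z] .
  have m2: "move1 (sw M z) (sw ?Ma z)" unfolding sw_addz using sMz skz[OF sMz] a
    unfolding move1_def addz_def extends_on_def by (auto simp: is_sbm_def)
  have za: "zr ?Ma a" by (simp add: zr_def addz_def)
  have zrl: "zr ?Ma x" if "zr M x" "x \<in> grd M" for x using that a by (auto simp: zr_def addz_def)
  have crl: "cr ?Ma x" if "cr M x" "x \<in> grd M" for x using that a sg by (auto simp: cr_def addz_def)
  have crs: "cr ?Ma (sng M)" by (simp add: cr_def addz_def)
  have G: "a \<in> grd ?Ma" "sng M \<in> grd ?Ma" "dst M \<in> grd ?Ma" "z \<in> grd ?Ma" using sg z by (auto simp: addz_def)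
  have dMa: "dst ?Ma = dst M" "sng ?Ma = sng M" by (auto simp: addz_def)
  have sws: "\<And>X g. is_sbm X \<Longrightarrow> g \<in> grd X \<Longrightarrow> is_sbm (sw X g)" by (rule is_sbm_sw)
  have toS: "hs ?Ma (sw ?Ma (sng M))"
  proof (cases "zr M (dst M)")
    case True
    have "cpl ?Ma (sng M) (dst ?Ma)" using zr_cr[OF zrl[OF True sg(2)] crs] dMa by simp
    then show ?thesis using hs_sw[OF sMa G(2)] by auto
  next
    case False
    then have cd: "cr ?Ma (dst M)" using d crl sg by auto
    have 1: "hom_step ?Ma (sw ?Ma a)"
      using hs_sw[OF sMa G(1)] cr_zr[OF cd za] dMa by simp
    have "cpl (sw ?Ma a) (sng M) (dst (sw ?Ma a))" using zr_cr[OF za crs] by simp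
    then have 2: "hom_step (sw ?Ma a) (sw ?Ma (sng M))"
      using hs_sw[OF sws[OF sMa G(1)], of "sng M"] G by simp
    show ?thesis using 1 2 by auto
  qed
  have fromS: "hs (sw ?Ma (sng M)) (sw ?Ma z)"
  proof (cases "zr M z")
    case True
    have "cpl ?Ma z (sng M)" using cr_zr[OF crs zrl[OF True z]] .
    then show ?thesis using hs_sw[OF sws[OF sMa G(2)], of z] G by auto
  next
    case False
    then have cz: "cr ?Ma z" using zz crl z by auto
    have 1: "hom_step (sw ?Ma (sng M)) (sw ?Ma a)"
      using hs_sw[OF sws[OF sMa G(2)], of a] G cr_zr[OF crs za] by simp
    have 2: "hom_step (sw ?Ma a) (sw ?Ma z)"
      using hs_sw[OF sws[OF sMa G(1)], of z] G zr_cr[OF za cz] by simp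
    show ?thesis using 1 2 by auto
  qed
  have "hom_step M ?Ma" using m1 by (simp add: hom_step_def elem_ext_def)
  moreover have "hom_step (sw ?Ma z) (sw M z)" using m2 by (simp add: hom_step_def elem_ext_def)
  ultimately show ?thesis using toS fromS
    by (meson converse_rtranclp_into_rtranclp rtranclp.rtrancl_into_rtrancl rtranclp_trans)
qed

lemma asw_hs: assumes "asw M M'" shows "hs M M'"
proof -
  from assms obtain z where z: "is_sbm M" "adm M z" "M' = sw M z" by (auto simp: asw_def)
  have zg: "z \<in> grd M" using z(2) by (simp add: adm_def)
  have dg: "dst M \<in> grd M" using z(1) by (simp add: is_sbm_def)
  consider (e) "eqr M z (dst M)" | (c) "cpl M z (dst M)" | (t) "(zr M (dst M) \<or> cr M (dst M)) \<and> (zr M z \<or> cr M z)"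
    using z(2) by (auto simp: adm_def)
  then show ?thesis
  proof cases
    case c then show ?thesis using hs_sw[OF z(1) zg] z(3) by auto
  next
    case t then show ?thesis using addz_chain[OF z(1) zg] z(3) by auto
  next
    case e
    show ?thesis
    proof (cases "z \<noteq> sng M \<and> dst M \<noteq> sng M")
      case True
      have "sbm_iso (rm (sw M (dst M)) {}) (rm (sw M (tr z (dst M) (dst M))) (tr z (dst M) ` {}))"
        by (rule tr_iso[OF z(1) zg dg e]) (use True dg in auto)
      then have "sbm_iso M M' \<or> M' = M" using z(3) by (cases "dst M = z") (auto simp: tr_def)
      then show ?thesis by (auto simp: hom_step_def)
    next
      case False
      then have "cr M (dst M) \<and> cr M z" using e by (auto simp: cr_def eqr_def)
      then show ?thesis using addz_chain[OF z(1) zg] z(3) by auto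
    qed
  qed
qed

lemma RR_hs: "RR M N \<Longrightarrow> hs M N"
  unfolding RR_def
proof (induction rule: rtranclp_induct)
  case base then show ?case by simp
next
  case (step y w)
  have "hs y w"
  proof (cases "E1 y w")
    case True then show ?thesis
      by (auto simp: E1_def hom_step_def dest: asw_hs)
  next
    case False
    then have "red y w" using step(2) by simp
    then obtain x X where x: "is_sbm y" "adm y x" "rmv y x X" "w = rm (sw y x) X" by (auto simp: red_def)
    have 1: "hs y (sw y x)" using asw_hs x by (auto simp: asw_def)
    have "elem_ext w (sw y x)" using rmv_elem[OF is_sbm_sw[OF x(1) adm_grd[OF x(2)]]] x by simp
    then have "hom_step (sw y x) w" by (simp add: hom_step_def)
    then show ?thesis using 1 by auto
  qed
  then show ?case using step(3) by auto
qed

lemma hom_step_sbm: "hom_step Y Y' \<Longrightarrow> is_sbm Y \<and> is_sbm Y'"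
  by (auto simp: hom_step_def sbm_iso_def elem_ext_def move1_def move2_def move3_def dest: ss_sbm)

lemma step_nf: assumes "hom_step Y Y'" "normal NY" "RR Y NY" "normal N'" "RR Y' N'" shows "eqv NY N'"
proof -
  have s: "is_sbm Y" "is_sbm Y'" using hom_step_sbm[OF assms(1)] by auto
  have "RR Y Y' \<or> RR Y' Y"
    using assms(1) unfolding hom_step_def
    by (auto intro: RR_iso RR_asw ss_asw dest!: elem_red intro: RR_trans RR_red)
  then show ?thesis
  proof
    assume "RR Y Y'" then show ?thesis using U[OF s(1) assms(3,2)] RR_trans assms(4,5) by blast
  next
    assume "RR Y' Y" then show ?thesis using U[OF s(2) _ assms(2) assms(5,4)] RR_trans assms(3) by blast
  qed
qed

lemma hom_nf: assumes "homologous M Q" "normal N" "RR M N" "normal N'" "RR Q N'" shows "eqv N N'"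
proof -
  have "hs M Q" "is_sbm M" using assms(1) by (auto simp: homologous_def)
  then have "\<forall>N'. normal N' \<and> RR Q N' \<longrightarrow> eqv N N'"
  proof (induction rule: rtranclp_induct)
    case base then show ?case using U assms(2,3) by blast
  next
    case (step y w)
    have sy: "is_sbm y" using hom_step_sbm[OF step(2)] by simp
    obtain Ny where Ny: "normal Ny" "RR y Ny" using exists_nf[OF sy] by blast
    show ?case using step(3)[OF step(4)] Ny step_nf[OF step(2) Ny] by (meson rtranclp_trans)
  qed
  then show ?thesis using assms(4,5) by blast
qed



subsection \<open>Classification\<close>

lemma iso_refl: "is_sbm M \<Longrightarrow> sbm_iso M M"
  unfolding sbm_iso_def by (auto intro!: exI[of _ id])

lemma iso_trans: assumes "sbm_iso A B" "sbm_iso B C" shows "sbm_iso A C"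
proof -
  obtain f where f: "bij_betw f (grd A) (grd B)" "f (sng A) = sng B" "f (dst A) = dst B"
    "\<And>x y. x \<in> grd A \<Longrightarrow> y \<in> grd A \<Longrightarrow> frm B (f x) (f y) = frm A x y" "is_sbm A" "is_sbm B"
    using isoE[OF assms(1)] by metis
  obtain g where g: "bij_betw g (grd B) (grd C)" "g (sng B) = sng C" "g (dst B) = dst C"
    "\<And>x y. x \<in> grd B \<Longrightarrow> y \<in> grd B \<Longrightarrow> frm C (g x) (g y) = frm B x y" "is_sbm B" "is_sbm C"
    using isoE[OF assms(2)] by metis
  have "bij_betw (g \<circ> f) (grd A) (grd C)" using f(1) g(1) by (rule bij_betw_trans)
  moreover have "\<forall>x\<in>grd A. \<forall>y\<in>grd A. frm C ((g \<circ> f) x) ((g \<circ> f) y) = frm A x y"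
  proof (intro ballI)
    fix x y assume xy: "x \<in> grd A" "y \<in> grd A"
    then have "f x \<in> grd B" "f y \<in> grd B" using f(1) by (auto simp: bij_betw_def)
    then show "frm C ((g \<circ> f) x) ((g \<circ> f) y) = frm A x y" using f(4)[OF xy] g(4) by simp
  qed
  ultimately show ?thesis unfolding sbm_iso_def using f g by auto
qed

lemma prim_noD: assumes "primitive Q" "switch_rel M1 Q \<or> sbm_iso M1 Q" "is_sbm M1" "rmv M1 (dst M1) Y"
  shows False
  using assms rmv_elem[OF assms(3,4)] unfolding primitive_def by blast

lemma prim_P1: "primitive Q \<Longrightarrow> \<not> rmv Q (dst Q) Y"
  using prim_noD[of Q Q] by (auto simp: switch_rel_def primitive_def)

lemma prim_P2: assumes "primitive Q" "p \<in> grd Q" "cpl Q p (dst Q)" shows "\<not> rmv Q p Y"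
proof
  assume r: "rmv Q p Y"
  have sQ: "is_sbm Q" using assms(1) by (simp add: primitive_def)
  have s1: "is_sbm (sw Q p)" using is_sbm_sw[OF sQ assms(2)] .
  have dg: "dst Q \<in> grd Q" using sQ by (simp add: is_sbm_def)
  have "sing_switch (sw Q p) Q"
    unfolding sing_switch_def using s1 dg cpl_sym[OF assms(3)]
    by (auto simp: cpl_def sw_def intro!: bexI[of _ "dst Q"])
  then have "switch_rel (sw Q p) Q" unfolding switch_rel_def using s1 sQ by auto
  then show False using prim_noD[OF assms(1) _ s1, of Y] r by simp
qed

lemma prim_P3: assumes "primitive Q" "p \<in> grd Q" "eqr Q p (dst Q)" "p \<noteq> sng Q" "dst Q \<noteq> sng Q"
  shows "\<not> rmv Q p Y"
proof
  assume r: "rmv Q p Y"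
  have sQ: "is_sbm Q" using assms(1) by (simp add: primitive_def)
  have s1: "is_sbm (sw Q p)" using is_sbm_sw[OF sQ assms(2)] .
  have dg: "dst Q \<in> grd Q" using sQ by (simp add: is_sbm_def)
  have "sbm_iso (rm (sw Q p) {}) (rm (sw Q (tr p (dst Q) p)) (tr p (dst Q) ` {}))"
    by (rule tr_iso[OF sQ assms(2) dg assms(3,4,5) assms(2)]) auto
  then have "sbm_iso (sw Q p) Q" by (simp add: tr_def)
  then show False using prim_noD[OF assms(1) _ s1, of Y] r by simp
qed

lemma cr_col: assumes "is_sbm Q" "cr Q d" "d \<in> grd Q" "y \<in> grd Q"
  shows "frm Q y d = frm Q y (sng Q)"
proof -
  have sk: "\<And>x y. x \<in> grd Q \<Longrightarrow> y \<in> grd Q \<Longrightarrow> frm Q x y = - frm Q y x"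
    using assms(1) unfolding is_sbm_def skew_on_def by blast
  have sg: "sng Q \<in> grd Q" using assms(1) by (simp add: is_sbm_def)
  have "frm Q y d = - frm Q d y" using sk assms(3,4) by blast
  also have "\<dots> = - frm Q (sng Q) y" using assms(2,4) by (simp add: cr_def)
  also have "\<dots> = frm Q y (sng Q)" using sk[OF sg assms(4)] by simp
  finally show ?thesis .
qed

lemma prim_red: assumes "primitive Q" "red Q A"
  shows "dst Q \<noteq> sng Q \<and> cr Q (dst Q) \<and> A = rm (sw Q (sng Q)) {dst Q}"
proof -
  have sQ: "is_sbm Q" using assms(1) by (simp add: primitive_def)
  let ?d = "dst Q" and ?s = "sng Q"
  have sg: "?s \<in> grd Q" "?d \<in> grd Q" using sQ by (auto simp: is_sbm_def)
  obtain x X where x: "adm Q x" "rmv Q x X" "A = rm (sw Q x) X" using assms(2) by (auto simp: red_def)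
  have xg: "x \<in> grd Q" using x(1) by (simp add: adm_def)
  have P1: "\<And>Y. \<not> rmv Q ?d Y" using prim_P1[OF assms(1)] .
  have xd: "x \<noteq> ?d" using P1 x(2) by auto
  have ncpl: "\<not> cpl Q x ?d" using prim_P2[OF assms(1) xg] x(2) by blast
  have t: "(zr Q ?d \<or> cr Q ?d) \<and> (zr Q x \<or> cr Q x)"
  proof -
    consider (e) "eqr Q x ?d" | (c) "cpl Q x ?d" | (t) "(zr Q ?d \<or> cr Q ?d) \<and> (zr Q x \<or> cr Q x)"
      using x(1) by (auto simp: adm_def)
    then show ?thesis
    proof cases
      case e
      have "\<not> (x \<noteq> ?s \<and> ?d \<noteq> ?s)" using prim_P3[OF assms(1) xg e] x(2) by blast
      then show ?thesis using e by (auto simp: cr_def eqr_def)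
    next
      case c then show ?thesis using ncpl by simp
    qed
  qed
  have xs: "x = ?s"
  proof (rule ccontr)
    assume "x \<noteq> ?s"
    then have "rmv Q ?d {x}" using t xd xg by (auto simp: rmv_def)
    then show False using P1 by blast
  qed
  have ds: "?d \<noteq> ?s" using xs xd by simp
  have crd: "cr Q ?d"
  proof (rule ccontr)
    assume "\<not> cr Q ?d"
    then have zd: "zr Q ?d" using t by simp
    have "cpl Q ?s ?d" using zr_cr[OF zd] by (simp add: cr_def)
    moreover have "rmv Q ?s {?d}" using zd ds sg by (auto simp: rmv_def)
    ultimately show False using prim_P2[OF assms(1) sg(1)] by blast
  qed
  have dX: "?d \<in> X" using P1 rmv_change[OF x(2)] by blast
  have "X = {?d}"
  proof (rule ccontr)
    assume "X \<noteq> {?d}"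
    then obtain q where q: "q \<noteq> ?d" "X = {?d,q}" "cpl Q ?d q"
      using rmv_cases[OF x(2)] dX pair_at by blast
    have "zr Q q" using cpl_cr[OF cpl_sym[OF q(3)] crd] .
    moreover have "q \<in> grd Q" "q \<noteq> ?s" using x(2) q(2) by (auto simp: rmv_def)
    ultimately have "rmv Q ?d {q}" using q(1) by (auto simp: rmv_def)
    then show False using P1 by blast
  qed
  then show ?thesis using ds crd x(3) xs by simp
qed

lemma delta_red: assumes "is_sbm Q" "dst Q \<noteq> sng Q" "cr Q (dst Q)"
  shows "red Q (rm (sw Q (sng Q)) {dst Q})"
proof -
  have sg: "sng Q \<in> grd Q" "dst Q \<in> grd Q" using assms(1) by (auto simp: is_sbm_def)
  have "cr Q (sng Q)" by (simp add: cr_def)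
  then have "adm Q (sng Q)" using sg assms(3) unfolding adm_def by blast
  moreover have "rmv Q (sng Q) {dst Q}" using sg assms(2,3) by (auto simp: rmv_def)
  ultimately show ?thesis using assms(1) by (auto simp: red_def)
qed

lemma delta_normal: assumes "primitive Q" "dst Q \<noteq> sng Q" "cr Q (dst Q)"
  shows "normal (rm (sw Q (sng Q)) {dst Q})"
proof -
  have sQ: "is_sbm Q" using assms(1) by (simp add: primitive_def)
  let ?d = "dst Q" and ?s = "sng Q" and ?Q' = "rm (sw Q (sng Q)) {dst Q}"
  have sg: "?s \<in> grd Q" "?d \<in> grd Q" using sQ by (auto simp: is_sbm_def)
  have P1: "\<And>Y. \<not> rmv Q ?d Y" using prim_P1[OF assms(1)] .
  have sQ': "is_sbm ?Q'" using is_sbm_rmsw[OF sQ sg(1)] assms(2) by auto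
  have col: "\<And>y. y \<in> grd Q \<Longrightarrow> frm Q y ?d = frm Q y ?s" using cr_col[OF sQ assms(3) sg(2)] .
  have ss: "frm Q ?s ?d = frm Q ?s ?s" using col[OF sg(1)] .
  have gQ': "grd ?Q' = grd Q - {?d}" "sng ?Q' = ?s" "dst ?Q' = ?s" "frm ?Q' = frm Q" by auto
  have lz: "zr Q y" if "zr ?Q' y" "y \<in> grd ?Q'" for y
    unfolding zr_def
  proof
    fix h assume h: "h \<in> grd Q"
    show "frm Q y h = 0"
    proof (cases "h = ?d")
      case True
      have "frm Q y ?s = 0" using that sg assms(2) by (auto simp: zr_def)
      then show ?thesis using True col that by auto
    next
      case False then show ?thesis using that h by (auto simp: zr_def)
    qed
  qed
  have lc: "cr Q y" if "cr ?Q' y" "y \<in> grd ?Q'" for y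
    unfolding cr_def
  proof
    fix h assume h: "h \<in> grd Q"
    show "frm Q y h = frm Q ?s h"
    proof (cases "h = ?d")
      case True
      have "frm Q y ?s = frm Q ?s ?s" using that sg assms(2) by (auto simp: cr_def)
      then show ?thesis using True col that ss by auto
    next
      case False then show ?thesis using that h by (auto simp: cr_def)
    qed
  qed
  have lp: "cpl Q y1 y2" if "cpl ?Q' y1 y2" "y1 \<in> grd ?Q'" "y2 \<in> grd ?Q'" for y1 y2
    unfolding cpl_def
  proof
    fix h assume h: "h \<in> grd Q"
    show "frm Q y1 h + frm Q y2 h = frm Q ?s h"
    proof (cases "h = ?d")
      case True
      have "frm Q y1 ?s + frm Q y2 ?s = frm Q ?s ?s" using that sg assms(2) by (auto simp: cpl_def)
      then show ?thesis using True col that ss by auto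
    next
      case False then show ?thesis using that h by (auto simp: cpl_def)
    qed
  qed
  have lrm: "rmv Q ?d Y" if r: "rmv ?Q' ?s Y" for Y
  proof -
    have Y: "Y \<subseteq> grd Q - {?d}" "?s \<notin> Y" using r by (auto simp: rmv_def)
    have "(\<exists>g. Y={g} \<and> (zr Q g \<or> cr Q g)) \<or> (\<exists>g1 g2. g1\<noteq>g2 \<and> Y={g1,g2} \<and> cpl Q g1 g2)"
    proof (cases "\<exists>g. Y={g} \<and> (zr ?Q' g \<or> cr ?Q' g)")
      case True
      then obtain g where "Y = {g}" "zr ?Q' g \<or> cr ?Q' g" by blast
      then show ?thesis using Y lz lc by auto
    next
      case False
      then obtain g1 g2 where g: "g1 \<noteq> g2" "Y = {g1,g2}" "cpl ?Q' g1 g2"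
        using rmv_cases[OF r] by blast
      then have "cpl Q g1 g2" using lp Y by auto
      then show ?thesis using g by blast
    qed
    then show ?thesis using Y by (auto simp: rmv_def)
  qed
  have "\<not> (\<exists>B. red ?Q' B)"
  proof
    assume "\<exists>B. red ?Q' B"
    then obtain x Y where x: "adm ?Q' x" "rmv ?Q' x Y" by (auto simp: red_def)
    have xg: "x \<in> grd Q - {?d}" using x(1) by (simp add: adm_def)
    show False
    proof (cases "x = ?s")
      case True then show False using lrm x(2) P1 by blast
    next
      case False
      have "zr ?Q' x \<or> cr ?Q' x" using x(1) unfolding adm_def
        by (auto simp: eqr_def cr_def zr_def cpl_def)
      then have "zr Q x \<or> cr Q x" using lz lc xg by auto
      then have "rmv Q ?d {x}" using xg False by (auto simp: rmv_def)
      then show False using P1 by blast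
    qed
  qed
  then show ?thesis using sQ' by (simp add: normal_def)
qed





lemma ext_iso: assumes "is_sbm Q" "dst Q \<noteq> sng Q" "cr Q (dst Q)"
  "is_sbm Q0" "dst Q0 \<noteq> sng Q0" "cr Q0 (dst Q0)"
  "sbm_iso (rm (sw Q (sng Q)) {dst Q}) (rm (sw Q0 (sng Q0)) {dst Q0})"
  shows "sbm_iso Q Q0"
proof -
  let ?d = "dst Q" and ?s = "sng Q" and ?dz = "dst Q0" and ?sz = "sng Q0"
  let ?Q' = "rm (sw Q (sng Q)) {dst Q}" and ?Qz' = "rm (sw Q0 (sng Q0)) {dst Q0}"
  obtain f where f0: "bij_betw f (grd ?Q') (grd ?Qz')" "f (sng ?Q') = sng ?Qz'"
    "\<And>x y. x \<in> grd ?Q' \<Longrightarrow> y \<in> grd ?Q' \<Longrightarrow> frm ?Qz' (f x) (f y) = frm ?Q' x y"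
    using isoE[OF assms(7)] by metis
  have f: "bij_betw f (grd Q - {?d}) (grd Q0 - {?dz})" "f ?s = ?sz"
    "\<And>x y. x \<in> grd Q - {?d} \<Longrightarrow> y \<in> grd Q - {?d} \<Longrightarrow> frm Q0 (f x) (f y) = frm Q x y"
    using f0 by auto
  have sg: "?s \<in> grd Q" "?d \<in> grd Q" using assms(1) by (auto simp: is_sbm_def)
  have sg0: "?sz \<in> grd Q0" "?dz \<in> grd Q0" using assms(4) by (auto simp: is_sbm_def)
  define F where "F = (\<lambda>x. if x = ?d then ?dz else f x)"
  have fm: "f x \<in> grd Q0 - {?dz}" if "x \<in> grd Q - {?d}" for x
    using f(1) that by (auto simp: bij_betw_def)
  have 1: "bij_betw F (grd Q - {?d}) (grd Q0 - {?dz})"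
    using f(1) by (rule bij_betw_cong[THEN iffD1, rotated]) (auto simp: F_def)
  have 2: "bij_betw F ((grd Q - {?d}) \<union> {?d}) ((grd Q0 - {?dz}) \<union> {F ?d})"
    using notIn_Un_bij_betw3[of ?d "grd Q - {?d}" F "grd Q0 - {?dz}"] 1 by (simp add: F_def)
  have bF: "bij_betw F (grd Q) (grd Q0)" using 2 sg sg0 by (simp add: F_def insert_absorb)
  have Fs: "F ?s = ?sz" using f(2) assms(2) by (simp add: F_def)
  have Fd: "F ?d = ?dz" by (simp add: F_def)
  have cr1: "\<And>h. h \<in> grd Q \<Longrightarrow> frm Q ?d h = frm Q ?s h" using assms(3) by (simp add: cr_def)
  have cr0: "\<And>h. h \<in> grd Q0 \<Longrightarrow> frm Q0 ?dz h = frm Q0 ?sz h" using assms(6) by (simp add: cr_def)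
  have col1: "\<And>y. y \<in> grd Q \<Longrightarrow> frm Q y ?d = frm Q y ?s" using cr_col[OF assms(1,3) sg(2)] .
  have col0: "\<And>y. y \<in> grd Q0 \<Longrightarrow> frm Q0 y ?dz = frm Q0 y ?sz" using cr_col[OF assms(4,6) sg0(2)] .
  have sd: "?s \<in> grd Q - {?d}" using sg assms(2) by auto
  have frmF: "frm Q0 (F x) (F y) = frm Q x y" if xy: "x \<in> grd Q" "y \<in> grd Q" for x y
  proof (cases "x = ?d")
    case True
    show ?thesis
    proof (cases "y = ?d")
      case True
      have "frm Q0 ?dz ?dz = frm Q0 ?sz ?sz" using cr0[OF sg0(2)] col0[OF sg0(1)] by simp
      also have "\<dots> = frm Q ?s ?s" using f(3)[OF sd sd] f(2) by simp
      also have "\<dots> = frm Q ?d ?d" using cr1[OF sg(2)] col1[OF sg(1)] by simp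
      finally show ?thesis using \<open>x = ?d\<close> True Fd by simp
    next
      case False
      have yd: "y \<in> grd Q - {?d}" using xy False by auto
      have "frm Q0 ?dz (f y) = frm Q0 ?sz (f y)" using cr0 fm[OF yd] by simp
      also have "\<dots> = frm Q ?s y" using f(3)[OF sd yd] f(2) by simp
      also have "\<dots> = frm Q ?d y" using cr1 xy by simp
      finally show ?thesis using \<open>x = ?d\<close> False by (simp add: F_def)
    qed
  next
    case xn: False
    have xd: "x \<in> grd Q - {?d}" using xy xn by auto
    show ?thesis
    proof (cases "y = ?d")
      case True
      have "frm Q0 (f x) ?dz = frm Q0 (f x) ?sz" using col0 fm[OF xd] by simp
      also have "\<dots> = frm Q x ?s" using f(3)[OF xd sd] f(2) by simp
      also have "\<dots> = frm Q x ?d" using col1 xy by simp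
      finally show ?thesis using xn True by (simp add: F_def)
    next
      case False
      have yd: "y \<in> grd Q - {?d}" using xy False by auto
      show ?thesis using f(3)[OF xd yd] xn False by (simp add: F_def)
    qed
  qed
  show ?thesis unfolding sbm_iso_def using assms(1,4) bF Fs Fd frmF by blast
qed

lemma single_rm: assumes "normal N" "adm N x" "g \<in> grd N" "g \<noteq> sng N" "g \<noteq> x" "zr N g \<or> cr N g"
  shows False
proof -
  have "rmv N x {g}" using assms(3-6) by (auto simp: rmv_def)
  then have "red N (rm (sw N x) {g})" using assms(1,2) by (auto simp: red_def normal_def)
  then show False using assms(1) by (auto simp: normal_def)
qed

lemma nadm: assumes "normal N" "adm N z"
  shows "sbm_iso (sw N z) N \<or> (cpl N z (dst N) \<and> z \<noteq> sng N)"
proof -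
  have sN: "is_sbm N" using assms(1) by (simp add: normal_def)
  let ?d = "dst N" and ?s = "sng N"
  have sg: "?s \<in> grd N" "?d \<in> grd N" using sN by (auto simp: is_sbm_def)
  have zg: "z \<in> grd N" using assms(2) by (simp add: adm_def)
  have ad: "adm N ?d" using adm_dst[OF sN] .
  have refl: "sbm_iso (sw N ?d) N" using iso_refl[OF sN] by simp
  consider (e) "eqr N z ?d" | (c) "cpl N z ?d" | (t) "(zr N ?d \<or> cr N ?d) \<and> (zr N z \<or> cr N z)"
    using assms(2) by (auto simp: adm_def)
  then show ?thesis
  proof cases
    case e
    show ?thesis
    proof (cases "z = ?d")
      case True then show ?thesis using refl by simp
    next
      case zd: False
      show ?thesis
      proof (cases "z \<noteq> ?s \<and> ?d \<noteq> ?s")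
        case True
        have "sbm_iso (rm (sw N z) {}) (rm (sw N (tr z ?d z)) (tr z ?d ` {}))"
          by (rule tr_iso[OF sN zg sg(2) e]) (use True zg in auto)
        then show ?thesis by (simp add: tr_def)
      next
        case False
        then have crs: "cr N ?d" "cr N z" using e by (auto simp: cr_def eqr_def)
        show ?thesis
        proof (cases "z = ?s")
          case True
          then show ?thesis using single_rm[OF assms(1,2) sg(2) _ _] crs zd by auto
        next
          case False
          then have "?d = ?s" using \<open>\<not> (z \<noteq> ?s \<and> ?d \<noteq> ?s)\<close> by simp
          then show ?thesis using single_rm[OF assms(1) ad zg] crs zd False by auto
        qed
      qed
    qed
  next
    case c
    show ?thesis
    proof (cases "z = ?s")
      case False then show ?thesis using c by simp
    next
      case True
      then have zd: "zr N ?d" using c by (simp add: cpl_def zr_def)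
      show ?thesis
      proof (cases "?d = ?s")
        case True then show ?thesis using refl \<open>z = ?s\<close> by simp
      next
        case False
        then show ?thesis using single_rm[OF assms(1,2) sg(2)] zd \<open>z = ?s\<close> by auto
      qed
    qed
  next
    case t
    have as: "adm N ?s" using adm_sng[OF sN assms(2)] t by blast
    show ?thesis
    proof (cases "z = ?s")
      case False
      then show ?thesis using single_rm[OF assms(1) as zg] t by auto
    next
      case True
      show ?thesis
      proof (cases "?d = ?s")
        case True then show ?thesis using refl \<open>z = ?s\<close> by simp
      next
        case False
        then show ?thesis using single_rm[OF assms(1) as sg(2)] t by auto
      qed
    qed
  qed
qed

lemma ntwo: assumes "normal N" "adm N z" "adm N w"
  shows "sbm_iso (sw N z) N \<or> sbm_iso (sw N w) N \<or> sbm_iso (sw N z) (sw N w)"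
proof -
  have sN: "is_sbm N" using assms(1) by (simp add: normal_def)
  have zg: "z \<in> grd N" "w \<in> grd N" using assms(2,3) by (auto simp: adm_def)
  show ?thesis
  proof (cases "sbm_iso (sw N z) N \<or> sbm_iso (sw N w) N")
    case True then show ?thesis by blast
  next
    case False
    then have c: "cpl N z (dst N)" "z \<noteq> sng N" "cpl N w (dst N)" "w \<noteq> sng N"
      using nadm[OF assms(1,2)] nadm[OF assms(1,3)] by auto
    have e: "eqr N z w" using cpl_cpl[OF c(3) c(1)] .
    have "sbm_iso (rm (sw N z) {}) (rm (sw N (tr z w z)) (tr z w ` {}))"
      by (rule tr_iso[OF sN zg e c(2,4) zg(1)]) auto
    then show ?thesis by (simp add: tr_def)
  qed
qed

lemma nsng: assumes "normal N" "dst N = sng N" "adm N z" shows "z = sng N"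
proof (rule ccontr)
  assume zs: "z \<noteq> sng N"
  have sN: "is_sbm N" using assms(1) by (simp add: normal_def)
  have zg: "z \<in> grd N" using assms(3) by (simp add: adm_def)
  have "zr N z \<or> cr N z" using assms(2,3) unfolding adm_def
    by (auto simp: eqr_def cr_def zr_def cpl_def)
  then show False using single_rm[OF assms(1) adm_dst[OF sN] zg zs] zs assms(2) by auto
qed

lemma nclass: assumes "normal N" "eqv N Y" shows "\<exists>z. adm N z \<and> sbm_iso Y (sw N z)"
  using assms(2)
proof (induction rule: rtranclp_induct)
  case base
  have sN: "is_sbm N" using assms(1) by (simp add: normal_def)
  show ?case using adm_dst[OF sN] iso_refl[OF sN] by (intro exI[of _ "dst N"]) simp
next
  case (step y w)
  obtain z where z: "adm N z" "sbm_iso y (sw N z)" using step(3) by blast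
  show ?case
  proof (cases "sbm_iso y w")
    case True
    then show ?thesis using z iso_trans iso_sym by blast
  next
    case False
    then obtain v where v: "is_sbm y" "adm y v" "w = sw y v" using step(2) by (auto simp: E1_def asw_def)
    obtain g where g: "bij_betw g (grd y) (grd (sw N z))" "g (sng y) = sng (sw N z)"
      "g (dst y) = dst (sw N z)"
      "\<And>a b. a \<in> grd y \<Longrightarrow> b \<in> grd y \<Longrightarrow> frm (sw N z) (g a) (g b) = frm y a b" "is_sbm (sw N z)"
      using isoE[OF z(2)] by metis
    have vg: "v \<in> grd y" using v(2) by (simp add: adm_def)
    have sN: "is_sbm N" using assms(1) by (simp add: normal_def)
    have "adm (sw N z) (g v)" using adm_tr[OF g(1,2,4) v(1) g(3) v(2)] .
    then have a: "adm N (g v)" using adm_back[OF sN z(1)] by simp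
    have "sbm_iso (rm (sw y v) {}) (rm (sw (sw N z) (g v)) (g ` {}))"
      using iso_rmsw[OF g(1,2,4) v(1) g(5) vg, of "{}"] by simp
    then have "sbm_iso w (sw N (g v))" using v(3) by simp
    then show ?thesis using a by blast
  qed
qed


lemma prim_class: assumes "is_sbm M" "normal N" "RR M N" "primitive Q" "homologous M Q"
  shows "(normal Q \<and> eqv N Q) \<or>
    (\<not> normal Q \<and> dst Q \<noteq> sng Q \<and> cr Q (dst Q) \<and> normal (rm (sw Q (sng Q)) {dst Q})
      \<and> eqv N (rm (sw Q (sng Q)) {dst Q}))"
proof (cases "normal Q")
  case True
  then show ?thesis using hom_nf[OF assms(5,2,3) True RR_refl] by blast
next
  case False
  have sQ: "is_sbm Q" using assms(4) by (simp add: primitive_def)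
  then obtain A where "red Q A" using False by (auto simp: normal_def)
  then have d: "dst Q \<noteq> sng Q" "cr Q (dst Q)" using prim_red[OF assms(4)] by auto
  have n: "normal (rm (sw Q (sng Q)) {dst Q})" using delta_normal[OF assms(4) d] .
  have "RR Q (rm (sw Q (sng Q)) {dst Q})" using delta_red[OF sQ d] by (rule RR_red)
  then show ?thesis using hom_nf[OF assms(5,2,3) n] False d n by blast
qed

lemma sng_class: assumes "normal P" "dst P = sng P" "eqv P Y" shows "sbm_iso Y P"
proof -
  obtain z where "adm P z" "sbm_iso Y (sw P z)" using nclass[OF assms(1,3)] by blast
  then show ?thesis using nsng[OF assms(1,2)] assms(2) by (metis sw_dst)
qed

theorem mainTheorem10:
  fixes M :: "('h::ab_group_add) sbm"
  assumes "is_sbm M"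
  shows "(\<exists>P. primitive P \<and> homologous M P \<and>
            (\<forall>Q. primitive Q \<and> homologous M Q \<longrightarrow> sbm_iso Q P))
       \<or> (\<exists>P1 P2. primitive P1 \<and> homologous M P1 \<and> primitive P2 \<and> homologous M P2 \<and>
            \<not> sbm_iso P1 P2 \<and>
            (\<forall>Q. primitive Q \<and> homologous M Q \<longrightarrow> sbm_iso Q P1 \<or> sbm_iso Q P2))"
proof -
  obtain N where N: "normal N" "RR M N" using exists_nf[OF assms] by blast
  have sN: "is_sbm N" using N(1) by (simp add: normal_def)
  have hN: "homologous M N" using assms sN RR_hs[OF N(2)] by (simp add: homologous_def)
  have pN: "primitive N" using normal_primitive[OF N(1)] .
  note cls = prim_class[OF assms N]
  show ?thesis
  proof (cases "\<exists>Q0. primitive Q0 \<and> homologous M Q0 \<and> \<not> normal Q0")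
    case True
    then obtain Q0 where Q0: "primitive Q0" "homologous M Q0" "\<not> normal Q0" by blast
    let ?Q0' = "rm (sw Q0 (sng Q0)) {dst Q0}"
    have d0: "dst Q0 \<noteq> sng Q0" "cr Q0 (dst Q0)" "normal ?Q0'" "eqv N ?Q0'"
      using cls[OF Q0(1,2)] Q0(3) by auto
    have sQ0: "is_sbm Q0" using Q0(1) by (simp add: primitive_def)
    have dq: "dst ?Q0' = sng ?Q0'" by simp
    have isoN: "sbm_iso N ?Q0'" using sng_class[OF d0(3) dq eqv_sym[OF d0(4)]] .
    have cardQ0: "card (grd ?Q0') = card (grd Q0) - 1"
      using sQ0 by (simp add: is_sbm_def)
    have pos: "card (grd Q0) > 0" using sQ0 by (auto simp: is_sbm_def card_gt_0_iff)
    have niso: "\<not> sbm_iso N Q0"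
    proof
      assume "sbm_iso N Q0"
      then have "card (grd N) = card (grd Q0)" by (rule iso_card)
      moreover have "card (grd N) = card (grd ?Q0')" using iso_card[OF isoN] .
      ultimately show False using cardQ0 pos by simp
    qed
    have all: "sbm_iso Q N \<or> sbm_iso Q Q0" if q: "primitive Q" "homologous M Q" for Q
    proof -
      from cls[OF q] show ?thesis
      proof
        assume a: "normal Q \<and> eqv N Q"
        have "eqv ?Q0' Q" using eqv_sym[OF d0(4)] a by (meson rtranclp_trans)
        then have "sbm_iso Q ?Q0'" using sng_class[OF d0(3) dq] by blast
        then show ?thesis using isoN iso_trans iso_sym by blast
      next
        let ?Q' = "rm (sw Q (sng Q)) {dst Q}"
        assume a: "\<not> normal Q \<and> dst Q \<noteq> sng Q \<and> cr Q (dst Q) \<and> normal ?Q' \<and> eqv N ?Q'"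
        have "eqv ?Q0' ?Q'" using eqv_sym[OF d0(4)] a by (meson rtranclp_trans)
        then have "sbm_iso ?Q' ?Q0'" using sng_class[OF d0(3) dq] by blast
        moreover have "is_sbm Q" using q(1) by (simp add: primitive_def)
        ultimately have "sbm_iso Q Q0" using ext_iso a sQ0 d0(1,2) by blast
        then show ?thesis by blast
      qed
    qed
    show ?thesis using pN hN Q0(1,2) niso all by blast
  next
    case False
    then have allN: "normal Q \<and> eqv N Q" if "primitive Q" "homologous M Q" for Q
      using cls[OF that] that by blast
    show ?thesis
    proof (cases "\<exists>z. adm N z \<and> \<not> sbm_iso (sw N z) N")
      case True
      then obtain z where z: "adm N z" "\<not> sbm_iso (sw N z) N" by blast
      have as: "asw N (sw N z)" using z(1) sN by (auto simp: asw_def)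
      have "E1 N (sw N z)" using as by (simp add: E1_def)
      then have nz: "normal (sw N z)" using normal_eqv[OF N(1)] by blast
      have pz: "primitive (sw N z)" using normal_primitive[OF nz] .
      have hz: "homologous M (sw N z)"
        using hN asw_hs[OF as] asw_sbm[OF as] by (auto simp: homologous_def)
      have ni: "\<not> sbm_iso N (sw N z)" using z(2) iso_sym by blast
      have all: "sbm_iso Q N \<or> sbm_iso Q (sw N z)" if q: "primitive Q" "homologous M Q" for Q
      proof -
        obtain w where w: "adm N w" "sbm_iso Q (sw N w)" using nclass[OF N(1)] allN[OF q] by blast
        show ?thesis using ntwo[OF N(1) z(1) w(1)] z(2) w(2) iso_trans iso_sym by blast
      qed
      show ?thesis using pN hN pz hz ni all by blast
    next
      case False
      have all: "sbm_iso Q N" if q: "primitive Q" "homologous M Q" for Q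
      proof -
        obtain w where w: "adm N w" "sbm_iso Q (sw N w)" using nclass[OF N(1)] allN[OF q] by blast
        then show ?thesis using False iso_trans by blast
      qed
      show ?thesis using pN hN all by blast
    qed
  qed
qed



end
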